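(* Let $(A,E,\alpha,\beta,\gamma)$ be an exact couple that converges conditionally to the colimit, and assume $RE^\infty_s=0$ for all $s$. Then the associated spectral sequence converges weakly to $A_\infty=\operatorname{colim}_sA_s$ with the filtration $F_sA_\infty=\operatorname{im}(\iota_s\colon A_s\to A_\infty)$, and this filtration is complete. Moreover $F_{-\infty}A_\infty\cong W$.
   Context: Work in the abelian category $\mathcal{A}$ of $\mathbb{Z}$-graded $R$-modules ($R$ a ring). An exact couple $(A,E,\alpha,\beta,\gamma)$ consists of objects $A_s,E_s$ ($s\in\mathbb{Z}$) and morphisms $\alpha_s\colon A_{s-1}\to A_s$, $\beta_s\colon A_s\to E_s$, $\gamma_s\colon E_s\to A_{s-1}$ such that $A_{s-1}\xrightarrow{\alpha}A_s\xrightarrow{\beta}E_s\xrightarrow{\gamma}A_{s-1}$ is exact at each vertex, for all $s$ (internal degree of $\alpha$ is $0$; those of $\beta,\gamma$ are $0,-1$ or $-1,0$). Its spectral sequence: $Z^r_s=\gamma^{-1}\operatorname{im}(\alpha^{r-1}\colon A_{s-r}\to A_{s-1})$, $B^r_s=\beta\ker(\alpha^{r-1}\colon A_s\to A_{s+r-1})$, $E^r_s=Z^r_s/B^r_s$, $d^r_s[x]=[\beta(y)]$ where $\gamma(x)=\alpha^{r-1}(y)$. Set $Z^\infty_s=\lim_rZ^r_s=\bigcap_rZ^r_s$, $B^\infty_s=\operatorname{colim}_rB^r_s=\bigcup_rB^r_s$, $E^\infty_s=Z^\infty_s/B^\infty_s$, $RE^\infty_s=\operatorname{Rlim}_rZ^r_s$,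 where $\operatorname{Rlim}=\lim^1$. $A_\infty=\operatorname{colim}_sA_s$ with structure maps $\iota_s$, $A_{-\infty}=\lim_sA_s$, $RA_{-\infty}=\operatorname{Rlim}_sA_s$. The exact couple converges conditionally to the colimit if $A_{-\infty}=0$ and $RA_{-\infty}=0$. A filtration of $G$ is a chain of subobjects $\cdots\subset F_{s-1}G\subset F_sG\subset\cdots\subset G$; $F_\infty G=\operatorname{colim}_sF_sG$, $F_{-\infty}G=\lim_sF_sG$, $RF_{-\infty}G=\operatorname{Rlim}_sF_sG$. It is exhaustive if $F_\infty G\to G$ is an isomorphism, Hausdorff if $F_{-\infty}G=0$, complete if $RF_{-\infty}G=0$. A spectral sequence converges weakly to filtered $G$ if the filtration is exhaustive and $E^\infty_s\cong F_sG/F_{s-1}G$ for all $s$. Boardman's whole-plane obstruction: $\operatorname{im}^rA_s=\operatorname{im}(\alpha^r\colon A_{s-r}\to A_s)$, $K_\infty\operatorname{im}^rA_s=\ker(\iota_s)\cap\operatorname{im}^rA_s$, $W=\operatorname{colim}_s\operatorname{Rlim}_rK_\infty\operatorname{im}^rA_s$. *)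

theory Defs
  imports Main
begin

record ('r, 'a) rmod =
  mcarrier :: "'a set"
  madd :: "'a \<Rightarrow> 'a \<Rightarrow> 'a"
  mzero :: "'a"
  msmult :: "'r \<Rightarrow> 'a \<Rightarrow> 'a"

definition is_mod :: "('r::ring_1, 'a) rmod \<Rightarrow> bool" where
  "is_mod M \<longleftrightarrow>
     mzero M \<in> mcarrier M
   \<and> (\<forall>x\<in>mcarrier M. \<forall>y\<in>mcarrier M. madd M x y \<in> mcarrier M)
   \<and> (\<forall>r. \<forall>x\<in>mcarrier M. msmult M r x \<in> mcarrier M)
   \<and> (\<forall>x\<in>mcarrier M. \<forall>y\<in>mcarrier M. \<forall>z\<in>mcarrier M.
        madd M (madd M x y) z = madd M x (madd M y z))
   \<and> (\<forall>x\<in>mcarrier M. \<forall>y\<in>mcarrier M. madd M x y = madd M y x)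
   \<and> (\<forall>x\<in>mcarrier M. madd M (mzero M) x = x)
   \<and> (\<forall>x\<in>mcarrier M. \<exists>y\<in>mcarrier M. madd M x y = mzero M)
   \<and> (\<forall>r. \<forall>x\<in>mcarrier M. \<forall>y\<in>mcarrier M.
        msmult M r (madd M x y) = madd M (msmult M r x) (msmult M r y))
   \<and> (\<forall>r q. \<forall>x\<in>mcarrier M. msmult M (r + q) x = madd M (msmult M r x) (msmult M q x))
   \<and> (\<forall>r q. \<forall>x\<in>mcarrier M. msmult M (r * q) x = msmult M r (msmult M q x))
   \<and> (\<forall>x\<in>mcarrier M. msmult M 1 x = x)"

definition mdiff :: "('r::ring_1, 'a) rmod \<Rightarrow> 'a \<Rightarrow> 'a \<Rightarrow> 'a" where
  "mdiff M x y = madd M x (msmult M (-1) y)"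

definition hom :: "('r, 'a) rmod \<Rightarrow> ('r, 'b) rmod \<Rightarrow> ('a \<Rightarrow> 'b) \<Rightarrow> bool" where
  "hom M N f \<longleftrightarrow>
     (\<forall>x\<in>mcarrier M. f x \<in> mcarrier N)
   \<and> (\<forall>x\<in>mcarrier M. \<forall>y\<in>mcarrier M. f (madd M x y) = madd N (f x) (f y))
   \<and> (\<forall>r. \<forall>x\<in>mcarrier M. f (msmult M r x) = msmult N r (f x))"

definition iso :: "('r, 'a) rmod \<Rightarrow> ('r, 'b) rmod \<Rightarrow> bool" where
  "iso M N \<longleftrightarrow> (\<exists>f. hom M N f \<and> bij_betw f (mcarrier M) (mcarrier N))"

definition trivial_mod :: "('r, 'a) rmod \<Rightarrow> bool" where
  "trivial_mod M \<longleftrightarrow> mcarrier M = {mzero M}"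

definition kerm :: "('r, 'a) rmod \<Rightarrow> ('r, 'b) rmod \<Rightarrow> ('a \<Rightarrow> 'b) \<Rightarrow> 'a set" where
  "kerm M N f = {x \<in> mcarrier M. f x = mzero N}"

definition sub :: "('r, 'a) rmod \<Rightarrow> 'a set \<Rightarrow> ('r, 'a) rmod" where
  "sub M S = M\<lparr>mcarrier := S\<rparr>"

definition coset :: "('r, 'a) rmod \<Rightarrow> 'a set \<Rightarrow> 'a \<Rightarrow> 'a set" where
  "coset M N x = {madd M x n | n. n \<in> N}"

definition rep :: "'a set \<Rightarrow> 'a" where
  "rep X = (SOME x. x \<in> X)"

definition quot :: "('r, 'a) rmod \<Rightarrow> 'a set \<Rightarrow> ('r, 'a set) rmod" where
  "quot M N = \<lparr> mcarrier = coset M N ` mcarrier M,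
                madd = (\<lambda>X Y. coset M N (madd M (rep X) (rep Y))),
                mzero = coset M N (mzero M),
                msmult = (\<lambda>r X. coset M N (msmult M r (rep X))) \<rparr>"

text \<open>Towers indexed by nat: X n with maps f n : X (Suc n) \<rightarrow> X n.\<close>
definition prodn :: "(nat \<Rightarrow> ('r, 'a) rmod) \<Rightarrow> ('r, nat \<Rightarrow> 'a) rmod" where
  "prodn X = \<lparr> mcarrier = {x. \<forall>n. x n \<in> mcarrier (X n)},
               madd = (\<lambda>x y n. madd (X n) (x n) (y n)),
               mzero = (\<lambda>n. mzero (X n)),
               msmult = (\<lambda>r x n. msmult (X n) r (x n)) \<rparr>"

definition dn :: "(nat \<Rightarrow> ('r::ring_1, 'a) rmod) \<Rightarrow> (nat \<Rightarrow> 'a \<Rightarrow> 'a) \<Rightarrow> (nat \<Rightarrow> 'a) set" where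
  "dn X f = (\<lambda>x. \<lambda>n. mdiff (X n) (x n) (f n (x (Suc n)))) ` mcarrier (prodn X)"

definition Rlim_nat :: "(nat \<Rightarrow> ('r::ring_1, 'a) rmod) \<Rightarrow> (nat \<Rightarrow> 'a \<Rightarrow> 'a)
    \<Rightarrow> ('r, (nat \<Rightarrow> 'a) set) rmod" where
  "Rlim_nat X f = quot (prodn X) (dn X f)"

definition Rlim_nat_map :: "(nat \<Rightarrow> ('r::ring_1, 'b) rmod) \<Rightarrow> (nat \<Rightarrow> 'b \<Rightarrow> 'b)
    \<Rightarrow> ((nat \<Rightarrow> 'a) \<Rightarrow> (nat \<Rightarrow> 'b)) \<Rightarrow> (nat \<Rightarrow> 'a) set \<Rightarrow> (nat \<Rightarrow> 'b) set" where
  "Rlim_nat_map Y f g X = coset (prodn Y) (dn Y f) (g (rep X))"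

text \<open>Towers indexed by int, limit taken as s \<rightarrow> -\<infinity>: X s with maps f s : X (s-1) \<rightarrow> X s.\<close>
definition prodz :: "(int \<Rightarrow> ('r, 'a) rmod) \<Rightarrow> ('r, int \<Rightarrow> 'a) rmod" where
  "prodz X = \<lparr> mcarrier = {x. \<forall>s. x s \<in> mcarrier (X s)},
               madd = (\<lambda>x y s. madd (X s) (x s) (y s)),
               mzero = (\<lambda>s. mzero (X s)),
               msmult = (\<lambda>r x s. msmult (X s) r (x s)) \<rparr>"

definition lim_int :: "(int \<Rightarrow> ('r, 'a) rmod) \<Rightarrow> (int \<Rightarrow> 'a \<Rightarrow> 'a) \<Rightarrow> ('r, int \<Rightarrow> 'a) rmod" where
  "lim_int X f = sub (prodz X) {x \<in> mcarrier (prodz X). \<forall>s. f s (x (s - 1)) = x s}"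

definition Rlim_int :: "(int \<Rightarrow> ('r::ring_1, 'a) rmod) \<Rightarrow> (int \<Rightarrow> 'a \<Rightarrow> 'a)
    \<Rightarrow> ('r, (int \<Rightarrow> 'a) set) rmod" where
  "Rlim_int X f = quot (prodz X)
      ((\<lambda>x. \<lambda>s. mdiff (X s) (x s) (f s (x (s - 1)))) ` mcarrier (prodz X))"

primrec fpow :: "(int \<Rightarrow> 'a \<Rightarrow> 'a) \<Rightarrow> nat \<Rightarrow> int \<Rightarrow> 'a \<Rightarrow> 'a" where
  "fpow f 0 s = id"
| "fpow f (Suc k) s = f s \<circ> fpow f k (s - 1)"
text \<open>fpow f k s is the composite X (s - k) \<rightarrow> X s.\<close>

definition ccls :: "(int \<Rightarrow> ('r, 'a) rmod) \<Rightarrow> (int \<Rightarrow> 'a \<Rightarrow> 'a) \<Rightarrow> int \<Rightarrow> 'a \<Rightarrow> (int \<times> 'a) set" where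
  "ccls X f s x = {(s', x'). x' \<in> mcarrier (X s') \<and>
      (\<exists>u. u \<ge> s \<and> u \<ge> s' \<and> fpow f (nat (u - s)) u x = fpow f (nat (u - s')) u x')}"

definition colim :: "(int \<Rightarrow> ('r, 'a) rmod) \<Rightarrow> (int \<Rightarrow> 'a \<Rightarrow> 'a) \<Rightarrow> ('r, (int \<times> 'a) set) rmod" where
  "colim X f = \<lparr> mcarrier = {ccls X f s x | s x. x \<in> mcarrier (X s)},
     madd = (\<lambda>P Q. let (s, x) = rep P; (s', x') = rep Q; u = max s s'
                    in ccls X f u (madd (X u) (fpow f (nat (u - s)) u x) (fpow f (nat (u - s')) u x'))),
     mzero = ccls X f 0 (mzero (X 0)),
     msmult = (\<lambda>r P. let (s, x) = rep P in ccls X f s (msmult (X s) r x)) \<rparr>"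

definition cinj :: "(int \<Rightarrow> ('r, 'a) rmod) \<Rightarrow> (int \<Rightarrow> 'a \<Rightarrow> 'a) \<Rightarrow> int \<Rightarrow> 'a \<Rightarrow> (int \<times> 'a) set" where
  "cinj X f s x = ccls X f s x"

text \<open>A graded object is given degreewise: A s t is the internal-degree-t part of A_s.
  alpha s t : A (s-1) t \<rightarrow> A s t (degree 0), beta s t : A s t \<rightarrow> E s (t+db),
  gamma s t : E s t \<rightarrow> A (s-1) (t+dg).\<close>

definition exact_couple ::
  "(int \<Rightarrow> int \<Rightarrow> ('r::ring_1, 'a) rmod) \<Rightarrow> (int \<Rightarrow> int \<Rightarrow> ('r, 'e) rmod)
   \<Rightarrow> (int \<Rightarrow> int \<Rightarrow> 'a \<Rightarrow> 'a) \<Rightarrow> (int \<Rightarrow> int \<Rightarrow> 'a \<Rightarrow> 'e) \<Rightarrow> (int \<Rightarrow> int \<Rightarrow> 'e \<Rightarrow> 'a)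
   \<Rightarrow> int \<Rightarrow> int \<Rightarrow> bool" where
  "exact_couple A E alpha beta gamma db dg \<longleftrightarrow>
     (db, dg) \<in> {(0, -1), (-1, 0)}
   \<and> (\<forall>s t. is_mod (A s t) \<and> is_mod (E s t))
   \<and> (\<forall>s t. hom (A (s - 1) t) (A s t) (alpha s t))
   \<and> (\<forall>s t. hom (A s t) (E s (t + db)) (beta s t))
   \<and> (\<forall>s t. hom (E s t) (A (s - 1) (t + dg)) (gamma s t))
   \<and> (\<forall>s t. alpha s t ` mcarrier (A (s - 1) t) = kerm (A s t) (E s (t + db)) (beta s t))
   \<and> (\<forall>s t. beta s t ` mcarrier (A s t)
              = kerm (E s (t + db)) (A (s - 1) (t + db + dg)) (gamma s (t + db)))
   \<and> (\<forall>s t. gamma s t ` mcarrier (E s t)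
              = kerm (A (s - 1) (t + dg)) (A s (t + dg)) (alpha s (t + dg)))"

abbreviation apow where "apow alpha t k s \<equiv> fpow (\<lambda>s. alpha s t) k s"

text \<open>Z^r_s in internal degree t (r \<ge> 1).\<close>
definition Zr :: "(int \<Rightarrow> int \<Rightarrow> ('r, 'a) rmod) \<Rightarrow> (int \<Rightarrow> int \<Rightarrow> ('r, 'e) rmod)
   \<Rightarrow> (int \<Rightarrow> int \<Rightarrow> 'a \<Rightarrow> 'a) \<Rightarrow> (int \<Rightarrow> int \<Rightarrow> 'e \<Rightarrow> 'a) \<Rightarrow> int
   \<Rightarrow> nat \<Rightarrow> int \<Rightarrow> int \<Rightarrow> 'e set" where
  "Zr A E alpha gamma dg r s t =
     {x \<in> mcarrier (E s t). gamma s t x \<in>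
        apow alpha (t + dg) (r - 1) (s - 1) ` mcarrier (A (s - int r) (t + dg))}"

text \<open>B^r_s in internal degree t (r \<ge> 1).\<close>
definition Br :: "(int \<Rightarrow> int \<Rightarrow> ('r, 'a) rmod)
   \<Rightarrow> (int \<Rightarrow> int \<Rightarrow> 'a \<Rightarrow> 'a) \<Rightarrow> (int \<Rightarrow> int \<Rightarrow> 'a \<Rightarrow> 'e) \<Rightarrow> int
   \<Rightarrow> nat \<Rightarrow> int \<Rightarrow> int \<Rightarrow> 'e set" where
  "Br A alpha beta db r s t =
     beta s (t - db) ` {y \<in> mcarrier (A s (t - db)).
        apow alpha (t - db) (r - 1) (s + int r - 1) y = mzero (A (s + int r - 1) (t - db))}"

definition Zinf where
  "Zinf A E alpha gamma dg s t = (\<Inter>r\<in>{1..}. Zr A E alpha gamma dg r s t)"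

definition Binf where
  "Binf A alpha beta db s t = (\<Union>r\<in>{1..}. Br A alpha beta db r s t)"

definition Einf where
  "Einf A E alpha beta gamma db dg s t =
     quot (sub (E s t) (Zinf A E alpha gamma dg s t)) (Binf A alpha beta db s t)"

text \<open>RE^\<infinity>_s = Rlim_r Z^r_s (tower of inclusions Z^(n+2) \<subseteq> Z^(n+1), n \<ge> 0).\<close>
definition REinf where
  "REinf A E alpha gamma dg s t =
     Rlim_nat (\<lambda>n. sub (E s t) (Zr A E alpha gamma dg (n + 1) s t)) (\<lambda>n. id)"

definition Ainf where "Ainf A alpha t = colim (\<lambda>s. A s t) (\<lambda>s. alpha s t)"
definition iota where "iota A alpha s t = cinj (\<lambda>s. A s t) (\<lambda>s. alpha s t) s"
definition Ffilt where "Ffilt A alpha s t = iota A alpha s t ` mcarrier (A s t)"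

definition Kim where
  "Kim A alpha s r t = kerm (A s t) (Ainf A alpha t) (iota A alpha s t)
                       \<inter> apow alpha t r s ` mcarrier (A (s - int r) t)"

definition Wtower where
  "Wtower A alpha s t = Rlim_nat (\<lambda>r. sub (A s t) (Kim A alpha s r t)) (\<lambda>r. id)"

text \<open>W = colim_s Rlim_r K_\<infinity> im^r A_s, with transition maps induced by alpha.\<close>
definition Wobj where
  "Wobj A alpha t = colim (\<lambda>s. Wtower A alpha s t)
     (\<lambda>s. Rlim_nat_map (\<lambda>r. sub (A s t) (Kim A alpha s r t)) (\<lambda>r. id)
                       (\<lambda>x r. alpha s t (x r)))"

end

theory Submission
  imports Defs
begin


definition mneg :: "('r::ring_1, 'a) rmod \<Rightarrow> 'a \<Rightarrow> 'a" where
  "mneg M x = msmult M (-1) x"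

definition submod :: "('r::ring_1, 'a) rmod \<Rightarrow> 'a set \<Rightarrow> bool" where
  "submod M N \<longleftrightarrow> N \<subseteq> mcarrier M \<and> mzero M \<in> N
     \<and> (\<forall>x\<in>N. \<forall>y\<in>N. madd M x y \<in> N) \<and> (\<forall>r. \<forall>x\<in>N. msmult M r x \<in> N)"

context fixes M :: "('r::ring_1, 'a) rmod" assumes m: "is_mod M"
begin

lemma mz[simp]: "mzero M \<in> mcarrier M" using m unfolding is_mod_def by (auto simp del: )
lemma ma[simp]: "x \<in> mcarrier M \<Longrightarrow> y \<in> mcarrier M \<Longrightarrow> madd M x y \<in> mcarrier M"
  using m unfolding is_mod_def by (auto simp del: )
lemma ms[simp]: "x \<in> mcarrier M \<Longrightarrow> msmult M r x \<in> mcarrier M"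
  using m unfolding is_mod_def by (auto simp del: )
lemma mn[simp]: "x \<in> mcarrier M \<Longrightarrow> mneg M x \<in> mcarrier M"
  unfolding mneg_def by simp
lemma md[simp]: "x \<in> mcarrier M \<Longrightarrow> y \<in> mcarrier M \<Longrightarrow> mdiff M x y \<in> mcarrier M"
  unfolding mdiff_def by simp
lemma add_assoc: "x \<in> mcarrier M \<Longrightarrow> y \<in> mcarrier M \<Longrightarrow> z \<in> mcarrier M \<Longrightarrow>
   madd M (madd M x y) z = madd M x (madd M y z)"
  using m unfolding is_mod_def by (auto simp del: )
lemma add_comm: "x \<in> mcarrier M \<Longrightarrow> y \<in> mcarrier M \<Longrightarrow> madd M x y = madd M y x"
  using m unfolding is_mod_def by (auto simp del: )
lemma add_lcomm: "x \<in> mcarrier M \<Longrightarrow> y \<in> mcarrier M \<Longrightarrow> z \<in> mcarrier M \<Longrightarrow>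
   madd M x (madd M y z) = madd M y (madd M x z)"
  by (metis add_assoc add_comm)
lemma zero_l[simp]: "x \<in> mcarrier M \<Longrightarrow> madd M (mzero M) x = x"
  using m unfolding is_mod_def by (auto simp del: )
lemma zero_r[simp]: "x \<in> mcarrier M \<Longrightarrow> madd M x (mzero M) = x"
  using add_comm zero_l by simp
lemma sm_add: "x \<in> mcarrier M \<Longrightarrow> y \<in> mcarrier M \<Longrightarrow>
   msmult M r (madd M x y) = madd M (msmult M r x) (msmult M r y)"
  using m unfolding is_mod_def by (auto simp del: )
lemma sm_plus: "x \<in> mcarrier M \<Longrightarrow> msmult M (r + q) x = madd M (msmult M r x) (msmult M q x)"
  using m unfolding is_mod_def by (auto simp del: )
lemma sm_mult: "x \<in> mcarrier M \<Longrightarrow> msmult M (r * q) x = msmult M r (msmult M q x)"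
  using m unfolding is_mod_def by (auto simp del: )
lemma sm_one[simp]: "x \<in> mcarrier M \<Longrightarrow> msmult M 1 x = x"
  using m unfolding is_mod_def by (auto simp del: )
lemma has_inv: "x \<in> mcarrier M \<Longrightarrow> \<exists>y\<in>mcarrier M. madd M x y = mzero M"
proof -
  have "\<forall>x\<in>mcarrier M. \<exists>y\<in>mcarrier M. madd M x y = mzero M" using m unfolding is_mod_def by simp
  thus "x \<in> mcarrier M \<Longrightarrow> \<exists>y\<in>mcarrier M. madd M x y = mzero M" by blast
qed

lemma cancel_l: assumes "x \<in> mcarrier M" "y \<in> mcarrier M" "z \<in> mcarrier M"
  and "madd M x y = madd M x z" shows "y = z"
proof -
  obtain w where w: "w \<in> mcarrier M" "madd M x w = mzero M" using has_inv assms(1) by blast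
  have "madd M (madd M w x) y = madd M (madd M w x) z"
    using assms w by (simp add: add_assoc)
  moreover have "madd M w x = mzero M" using w assms add_comm by simp
  ultimately show ?thesis using assms by simp
qed

lemma sm_zero_sc[simp]: assumes "x \<in> mcarrier M" shows "msmult M 0 x = mzero M"
proof -
  have "madd M (msmult M 0 x) (msmult M 0 x) = madd M (msmult M 0 x) (mzero M)"
    using sm_plus[of x 0 0] assms by simp
  thus ?thesis using cancel_l assms by (metis mz ms)
qed

lemma add_neg[simp]: "x \<in> mcarrier M \<Longrightarrow> madd M x (mneg M x) = mzero M"
  unfolding mneg_def using sm_plus[of x 1 "-1"] by simp
lemma neg_add_l[simp]: "x \<in> mcarrier M \<Longrightarrow> madd M (mneg M x) x = mzero M"
  using add_comm by simp

lemma sm_zero[simp]: "msmult M r (mzero M) = mzero M"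
proof -
  have "madd M (msmult M r (mzero M)) (msmult M r (mzero M)) = madd M (msmult M r (mzero M)) (mzero M)"
    using sm_add[of "mzero M" "mzero M" r] by simp
  thus ?thesis using cancel_l by (metis mz ms)
qed

lemma add_neg2[simp]: "x \<in> mcarrier M \<Longrightarrow> y \<in> mcarrier M \<Longrightarrow> madd M x (madd M (mneg M x) y) = y"
  by (simp flip: add_assoc)
lemma add_neg3[simp]: "x \<in> mcarrier M \<Longrightarrow> y \<in> mcarrier M \<Longrightarrow> madd M (mneg M x) (madd M x y) = y"
  by (simp flip: add_assoc)

lemma neg_unique: assumes "x \<in> mcarrier M" "y \<in> mcarrier M" "madd M x y = mzero M"
  shows "y = mneg M x"
  using cancel_l[of x y "mneg M x"] assms by simp

lemma neg_neg[simp]: "x \<in> mcarrier M \<Longrightarrow> mneg M (mneg M x) = x"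
  using neg_unique[of "mneg M x" x] by simp
lemma neg_zero[simp]: "mneg M (mzero M) = mzero M"
  unfolding mneg_def by simp
lemma neg_add: "x \<in> mcarrier M \<Longrightarrow> y \<in> mcarrier M \<Longrightarrow>
   mneg M (madd M x y) = madd M (mneg M x) (mneg M y)"
  unfolding mneg_def by (simp add: sm_add)
lemma neg_sm: "x \<in> mcarrier M \<Longrightarrow> mneg M (msmult M r x) = msmult M r (mneg M x)"
  unfolding mneg_def by (simp flip: sm_mult)

lemma mdiff_eq: "mdiff M x y = madd M x (mneg M y)" unfolding mdiff_def mneg_def ..

lemmas add_ac = add_assoc add_comm add_lcomm

lemma diff_zero_iff: "x \<in> mcarrier M \<Longrightarrow> y \<in> mcarrier M \<Longrightarrow> mdiff M x y = mzero M \<longleftrightarrow> x = y"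
proof
  assume "x \<in> mcarrier M" "y \<in> mcarrier M" "mdiff M x y = mzero M"
  thus "x = y" unfolding mdiff_eq using neg_unique[of "mneg M y" x] add_comm by simp
qed (simp add: mdiff_eq)

lemma diff_self[simp]: "x \<in> mcarrier M \<Longrightarrow> mdiff M x x = mzero M"
  by (simp add: mdiff_eq)
lemma diff_zero[simp]: "x \<in> mcarrier M \<Longrightarrow> mdiff M x (mzero M) = x"
  by (simp add: mdiff_eq)

lemma eq_add_iff: "x \<in> mcarrier M \<Longrightarrow> y \<in> mcarrier M \<Longrightarrow> z \<in> mcarrier M \<Longrightarrow>
  x = madd M y z \<longleftrightarrow> mdiff M x y = z"
  unfolding mdiff_eq by (metis add_comm add_neg2 add_neg3 mn)

lemma diff_add_distrib: assumes "a \<in> mcarrier M" "b \<in> mcarrier M" "c \<in> mcarrier M" "d \<in> mcarrier M"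
  shows "mdiff M (madd M a b) (madd M c d) = madd M (mdiff M a c) (mdiff M b d)"
proof -
  have "mdiff M (madd M a b) (madd M c d) = madd M (madd M a b) (madd M (mneg M c) (mneg M d))"
    using assms by (simp add: mdiff_eq neg_add)
  also have "\<dots> = madd M a (madd M b (madd M (mneg M c) (mneg M d)))"
    using assms by (simp add: add_assoc)
  also have "\<dots> = madd M a (madd M (mneg M c) (madd M b (mneg M d)))"
    using assms add_lcomm[of b "mneg M c" "mneg M d"] by simp
  also have "\<dots> = madd M (mdiff M a c) (mdiff M b d)"
    using assms by (simp add: add_assoc mdiff_eq)
  finally show ?thesis .
qed

lemma neg_diff: "x \<in> mcarrier M \<Longrightarrow> y \<in> mcarrier M \<Longrightarrow> mneg M (mdiff M x y) = mdiff M y x"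
  using add_comm[of "mneg M x" y] by (simp add: mdiff_eq neg_add)

lemma diff_diff_distrib: assumes "a \<in> mcarrier M" "b \<in> mcarrier M" "c \<in> mcarrier M" "d \<in> mcarrier M"
  shows "mdiff M (mdiff M a b) (mdiff M c d) = mdiff M (mdiff M a c) (mdiff M b d)"
proof -
  have "mdiff M (mdiff M a b) (mdiff M c d) = mdiff M (madd M a (mneg M b)) (madd M c (mneg M d))"
    by (simp add: mdiff_eq)
  also have "\<dots> = madd M (mdiff M a c) (mdiff M (mneg M b) (mneg M d))"
    using assms by (simp add: diff_add_distrib)
  also have "mdiff M (mneg M b) (mneg M d) = mneg M (mdiff M b d)"
    using assms by (simp add: mdiff_eq neg_add)
  finally show ?thesis using assms by (simp add: mdiff_eq[of "mdiff M a c"])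
qed

lemma diff_sm_distrib: assumes "a \<in> mcarrier M" "c \<in> mcarrier M"
  shows "mdiff M (msmult M r a) (msmult M r c) = msmult M r (mdiff M a c)"
  using assms by (simp add: mdiff_eq sm_add neg_sm)

lemma diff_add_cancel: "a \<in> mcarrier M \<Longrightarrow> b \<in> mcarrier M \<Longrightarrow> madd M (mdiff M a b) b = a"
  by (simp add: mdiff_eq add_assoc)
lemma add_diff_cancel: "a \<in> mcarrier M \<Longrightarrow> b \<in> mcarrier M \<Longrightarrow> mdiff M (madd M a b) b = a"
  by (simp add: mdiff_eq add_assoc)

end



lemma sub_simps[simp]: "mcarrier (sub M S) = S" "madd (sub M S) = madd M"
  "mzero (sub M S) = mzero M" "msmult (sub M S) = msmult M"
  by (simp_all add: sub_def)

lemma mneg_sub[simp]: "mneg (sub M S) = mneg M" unfolding mneg_def by (simp add: fun_eq_iff)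
lemma mdiff_sub[simp]: "mdiff (sub M S) = mdiff M" unfolding mdiff_def by (simp add: fun_eq_iff)

lemma submod_sub_is_mod: assumes m: "is_mod M" and s: "submod M S" shows "is_mod (sub M S)"
proof -
  have sc: "\<And>x. x \<in> S \<Longrightarrow> x \<in> mcarrier M" using s unfolding submod_def by blast
  have neg: "\<And>x. x \<in> S \<Longrightarrow> mneg M x \<in> S" using s unfolding submod_def mneg_def by blast
  show ?thesis unfolding is_mod_def sub_simps
    using s m sc neg
    apply (intro conjI)
    apply (simp_all add: submod_def add_assoc sm_add sm_plus sm_mult)
    apply (meson add_comm sc)
    apply (metis add_neg sc neg)
    done
qed

lemma submod_carrier: "submod M M' \<Longrightarrow> x \<in> M' \<Longrightarrow> x \<in> mcarrier M"
  unfolding submod_def by blast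
lemma submod_zero: "submod M N \<Longrightarrow> mzero M \<in> N" unfolding submod_def by blast
lemma submod_add: "submod M N \<Longrightarrow> x \<in> N \<Longrightarrow> y \<in> N \<Longrightarrow> madd M x y \<in> N"
  unfolding submod_def by blast
lemma submod_sm: "submod M N \<Longrightarrow> x \<in> N \<Longrightarrow> msmult M r x \<in> N"
  unfolding submod_def by blast
lemma submod_neg: "submod M N \<Longrightarrow> x \<in> N \<Longrightarrow> mneg M x \<in> N"
  unfolding submod_def mneg_def by blast
lemma submod_diff: "submod M N \<Longrightarrow> x \<in> N \<Longrightarrow> y \<in> N \<Longrightarrow> mdiff M x y \<in> N"
  unfolding mdiff_def by (simp add: submod_add submod_sm)

lemma submod_Int: "submod M N \<Longrightarrow> submod M N' \<Longrightarrow> submod M (N \<inter> N')"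
  unfolding submod_def by blast

lemma submod_full: "is_mod M \<Longrightarrow> submod M (mcarrier M)"
  unfolding submod_def by simp

lemma submod_in_sub: "submod M N \<Longrightarrow> N \<subseteq> S \<Longrightarrow> submod (sub M S) N"
  unfolding submod_def by auto

context fixes M N f assumes m: "is_mod M" and n: "is_mod N" and h: "hom M N f"
begin
lemma hom_c[simp]: "x \<in> mcarrier M \<Longrightarrow> f x \<in> mcarrier N" using h unfolding hom_def by blast
lemma hom_add: "x \<in> mcarrier M \<Longrightarrow> y \<in> mcarrier M \<Longrightarrow> f (madd M x y) = madd N (f x) (f y)"
  using h unfolding hom_def by blast
lemma hom_sm: "x \<in> mcarrier M \<Longrightarrow> f (msmult M r x) = msmult N r (f x)"
  using h unfolding hom_def by blast
lemma hom_zero[simp]: "f (mzero M) = mzero N"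
proof -
  have z: "msmult M 0 (mzero M) = mzero M" by (rule sm_zero_sc[OF m mz[OF m]])
  have "f (mzero M) = f (msmult M 0 (mzero M))" using z by simp
  also have "\<dots> = msmult N 0 (f (mzero M))" using hom_sm m mz by blast
  also have "\<dots> = mzero N" using sm_zero_sc[OF n] hom_c mz[OF m] by blast
  finally show ?thesis .
qed
lemma hom_neg: "x \<in> mcarrier M \<Longrightarrow> f (mneg M x) = mneg N (f x)"
  unfolding mneg_def using hom_sm by simp
lemma hom_diff: "x \<in> mcarrier M \<Longrightarrow> y \<in> mcarrier M \<Longrightarrow> f (mdiff M x y) = mdiff N (f x) (f y)"
proof -
  assume x: "x \<in> mcarrier M" and y: "y \<in> mcarrier M"
  have "f (madd M x (msmult M (-1) y)) = madd N (f x) (f (msmult M (-1) y))"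
    using hom_add[OF x ms[OF m y]] .
  also have "f (msmult M (-1) y) = msmult N (-1) (f y)" using hom_sm[OF y] .
  finally show ?thesis unfolding mdiff_def .
qed
lemma hom_img_submod: assumes s: "submod M S" shows "submod N (f ` S)"
  unfolding submod_def
proof (intro conjI ballI allI)
  show "f ` S \<subseteq> mcarrier N"
  proof (rule image_subsetI)
    fix a assume "a \<in> S" thus "f a \<in> mcarrier N" by (rule hom_c[OF submod_carrier[OF s]])
  qed
  have "f (mzero M) \<in> f ` S" using submod_zero[OF s] by (rule imageI)
  thus "mzero N \<in> f ` S" by (simp only: hom_zero)
  fix x y assume "x \<in> f ` S" "y \<in> f ` S"
  then obtain a b where ab: "a \<in> S" "b \<in> S" "x = f a" "y = f b" by blast
  have "f (madd M a b) \<in> f ` S" using submod_add[OF s ab(1,2)] by (rule imageI)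
  thus "madd N x y \<in> f ` S" using hom_add[OF submod_carrier[OF s ab(1)] submod_carrier[OF s ab(2)]] ab by simp
next
  fix r x assume "x \<in> f ` S"
  then obtain a where a: "a \<in> S" "x = f a" by blast
  have "f (msmult M r a) \<in> f ` S" using submod_sm[OF s a(1)] by (rule imageI)
  thus "msmult N r x \<in> f ` S" using hom_sm[OF submod_carrier[OF s a(1)]] a by simp
qed
lemma hom_ker_submod: "submod M (kerm M N f)"
  unfolding submod_def kerm_def using m n hom_zero by (auto simp: hom_add hom_sm)
end

lemma hom_sub_dom: "hom M N f \<Longrightarrow> S \<subseteq> mcarrier M \<Longrightarrow> hom (sub M S) N f"
  unfolding hom_def by (simp add: subset_iff)
lemma hom_sub_cod: "hom M N f \<Longrightarrow> f ` mcarrier M \<subseteq> S \<Longrightarrow> hom M (sub N S) f"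
  unfolding hom_def by auto

section \<open>cosets and quotients\<close>

lemma quot_madd: "madd (quot M N) X Y = coset M N (madd M (rep X) (rep Y))"
  unfolding quot_def rmod.select_convs ..
lemma quot_msmult: "msmult (quot M N) r X = coset M N (msmult M r (rep X))"
  unfolding quot_def rmod.select_convs ..

context fixes M N assumes m: "is_mod M" and s: "submod M N"
begin
lemma Nc: "x \<in> N \<Longrightarrow> x \<in> mcarrier M" by (rule submod_carrier[OF s])

lemma in_coset_iff: "x \<in> mcarrier M \<Longrightarrow> y \<in> coset M N x \<longleftrightarrow> y \<in> mcarrier M \<and> mdiff M y x \<in> N"
proof
  assume x: "x \<in> mcarrier M" and "y \<in> coset M N x"
  then obtain n where n: "n \<in> N" "y = madd M x n" unfolding coset_def by blast
  thus "y \<in> mcarrier M \<and> mdiff M y x \<in> N" using x m Nc[OF n(1)]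
    by (metis eq_add_iff ma)
next
  assume x: "x \<in> mcarrier M" and "y \<in> mcarrier M \<and> mdiff M y x \<in> N"
  hence "y = madd M x (mdiff M y x)" using eq_add_iff[OF m, of y x "mdiff M y x"] m x by simp
  thus "y \<in> coset M N x" unfolding coset_def using \<open>y \<in> mcarrier M \<and> mdiff M y x \<in> N\<close> by blast
qed

lemma self_in_coset: "x \<in> mcarrier M \<Longrightarrow> x \<in> coset M N x"
  using in_coset_iff m s submod_zero by simp

lemma coset_eq_iff: "x \<in> mcarrier M \<Longrightarrow> y \<in> mcarrier M \<Longrightarrow>
   coset M N x = coset M N y \<longleftrightarrow> mdiff M x y \<in> N"
proof
  assume x: "x \<in> mcarrier M" and y: "y \<in> mcarrier M" and "coset M N x = coset M N y"
  thus "mdiff M x y \<in> N" using self_in_coset in_coset_iff by blast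
next
  assume x: "x \<in> mcarrier M" and y: "y \<in> mcarrier M" and d: "mdiff M x y \<in> N"
  have sub: "coset M N x \<subseteq> coset M N y" if x: "x \<in> mcarrier M" and y: "y \<in> mcarrier M"
    and d: "mdiff M x y \<in> N" for x y
  proof
    fix z assume "z \<in> coset M N x"
    hence z: "z \<in> mcarrier M" "mdiff M z x \<in> N" using in_coset_iff x by auto
    have "mdiff M z y = madd M (mdiff M z x) (mdiff M x y)"
      using x y z m by (simp add: mdiff_eq add_assoc)
    hence "mdiff M z y \<in> N" using z d s submod_add by metis
    thus "z \<in> coset M N y" using in_coset_iff y z by blast
  qed
  have "mdiff M y x = mneg M (mdiff M x y)" using x y m by (simp add: neg_diff)
  hence "mdiff M y x \<in> N" using d s submod_neg by metis
  thus "coset M N x = coset M N y" using sub x y d by blast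
qed

lemma rep_coset: assumes "x \<in> mcarrier M"
  shows "rep (coset M N x) \<in> mcarrier M" "mdiff M (rep (coset M N x)) x \<in> N"
    "coset M N (rep (coset M N x)) = coset M N x"
proof -
  have "rep (coset M N x) \<in> coset M N x" unfolding rep_def
    by (rule someI, rule self_in_coset[OF assms])
  thus "rep (coset M N x) \<in> mcarrier M" "mdiff M (rep (coset M N x)) x \<in> N"
    using in_coset_iff assms by auto
  thus "coset M N (rep (coset M N x)) = coset M N x" using coset_eq_iff assms by blast
qed

lemma quot_carrier: "mcarrier (quot M N) = coset M N ` mcarrier M" unfolding quot_def rmod.select_convs ..
lemma quot_zero: "mzero (quot M N) = coset M N (mzero M)" unfolding quot_def rmod.select_convs ..

lemma quot_add: assumes x: "x \<in> mcarrier M" and y: "y \<in> mcarrier M"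
  shows "madd (quot M N) (coset M N x) (coset M N y) = coset M N (madd M x y)"
proof -
  let ?x = "rep (coset M N x)" and ?y = "rep (coset M N y)"
  have c: "?x \<in> mcarrier M" "?y \<in> mcarrier M" "mdiff M ?x x \<in> N" "mdiff M ?y y \<in> N"
    using rep_coset x y by auto
  have eq: "mdiff M (madd M ?x ?y) (madd M x y) = madd M (mdiff M ?x x) (mdiff M ?y y)"
    using c x y m by (simp add: diff_add_distrib)
  have "mdiff M (madd M ?x ?y) (madd M x y) \<in> N" unfolding eq by (rule submod_add[OF s c(3) c(4)])
  hence e: "coset M N (madd M ?x ?y) = coset M N (madd M x y)"
    using coset_eq_iff[of "madd M ?x ?y" "madd M x y"] c x y m by simp
  show ?thesis unfolding quot_madd using e .
qed

lemma quot_sm: assumes x: "x \<in> mcarrier M"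
  shows "msmult (quot M N) r (coset M N x) = coset M N (msmult M r x)"
proof -
  let ?x = "rep (coset M N x)"
  have c: "?x \<in> mcarrier M" "mdiff M ?x x \<in> N" using rep_coset x by auto
  have eq: "mdiff M (msmult M r ?x) (msmult M r x) = msmult M r (mdiff M ?x x)"
    using c x m by (simp add: diff_sm_distrib)
  have "mdiff M (msmult M r ?x) (msmult M r x) \<in> N" unfolding eq by (rule submod_sm[OF s c(2)])
  hence e: "coset M N (msmult M r ?x) = coset M N (msmult M r x)"
    using coset_eq_iff[of "msmult M r ?x" "msmult M r x"] c x m by simp
  show ?thesis unfolding quot_msmult using e .
qed

lemma quot_trivial_iff: "trivial_mod (quot M N) \<longleftrightarrow> mcarrier M \<subseteq> N"
proof
  assume t: "trivial_mod (quot M N)"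
  have "\<And>x. x \<in> mcarrier M \<Longrightarrow> coset M N x = coset M N (mzero M)"
  proof -
    fix x assume x: "x \<in> mcarrier M"
    have "coset M N x \<in> coset M N ` mcarrier M" using x by (rule imageI)
    thus "coset M N x = coset M N (mzero M)" using t unfolding trivial_mod_def quot_carrier quot_zero by simp
  qed
  show "mcarrier M \<subseteq> N"
  proof
    fix x assume x: "x \<in> mcarrier M"
    have "coset M N x = coset M N (mzero M)" by (rule \<open>\<And>x. x \<in> mcarrier M \<Longrightarrow> coset M N x = coset M N (mzero M)\<close>[OF x])
    hence "mdiff M x (mzero M) \<in> N" using iffD1[OF coset_eq_iff[OF x mz[OF m]]] by blast
    thus "x \<in> N" using diff_zero[OF m x] by simp
  qed
next
  assume a: "mcarrier M \<subseteq> N"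
  have "\<And>x. x \<in> mcarrier M \<Longrightarrow> coset M N x = coset M N (mzero M)"
  proof -
    fix x assume x: "x \<in> mcarrier M"
    hence "mdiff M x (mzero M) \<in> N" using a diff_zero[OF m x] by auto
    thus "coset M N x = coset M N (mzero M)" using iffD2[OF coset_eq_iff[OF x mz[OF m]]] by blast
  qed
  hence "coset M N ` mcarrier M = {coset M N (mzero M)}" using imageI[OF mz[OF m], of "coset M N"] by blast
  thus "trivial_mod (quot M N)" unfolding trivial_mod_def quot_carrier quot_zero .
qed

end

section \<open>products\<close>

lemma prodn_simps[simp]: "mcarrier (prodn X) = {x. \<forall>n. x n \<in> mcarrier (X n)}"
  "madd (prodn X) x y = (\<lambda>n. madd (X n) (x n) (y n))"
  "mzero (prodn X) = (\<lambda>n. mzero (X n))"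
  "msmult (prodn X) r x = (\<lambda>n. msmult (X n) r (x n))"
  by (simp_all add: prodn_def)
lemma prodz_simps[simp]: "mcarrier (prodz X) = {x. \<forall>n. x n \<in> mcarrier (X n)}"
  "madd (prodz X) x y = (\<lambda>n. madd (X n) (x n) (y n))"
  "mzero (prodz X) = (\<lambda>n. mzero (X n))"
  "msmult (prodz X) r x = (\<lambda>n. msmult (X n) r (x n))"
  by (simp_all add: prodz_def)

lemma prodn_mdiff: "mdiff (prodn X) x y = (\<lambda>n. mdiff (X n) (x n) (y n))"
  unfolding mdiff_def by simp
lemma prodz_mdiff: "mdiff (prodz X) x y = (\<lambda>n. mdiff (X n) (x n) (y n))"
  unfolding mdiff_def by simp

lemma prodn_is_mod: assumes "\<And>n. is_mod (X n)" shows "is_mod (prodn X)"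
proof -
  have inv: "\<And>x. \<forall>n. x n \<in> mcarrier (X n) \<Longrightarrow> \<exists>y. (\<forall>n. y n \<in> mcarrier (X n)) \<and>
     (\<lambda>n. madd (X n) (x n) (y n)) = (\<lambda>n. mzero (X n))"
    by (rule_tac x="\<lambda>n. mneg (X n) (x n)" in exI) (simp add: assms)
  show ?thesis unfolding is_mod_def prodn_simps using assms inv
    by (simp add: fun_eq_iff add_assoc sm_add sm_plus sm_mult) (meson add_comm)
qed

lemma prodz_is_mod: assumes "\<And>n. is_mod (X n)" shows "is_mod (prodz X)"
proof -
  have inv: "\<And>x. \<forall>n. x n \<in> mcarrier (X n) \<Longrightarrow> \<exists>y. (\<forall>n. y n \<in> mcarrier (X n)) \<and>
     (\<lambda>n. madd (X n) (x n) (y n)) = (\<lambda>n. mzero (X n))"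
    by (rule_tac x="\<lambda>n. mneg (X n) (x n)" in exI) (simp add: assms)
  show ?thesis unfolding is_mod_def prodz_simps using assms inv
    by (simp add: fun_eq_iff add_assoc sm_add sm_plus sm_mult) (meson add_comm)
qed

lemma dn_submod: assumes m: "\<And>n. is_mod (X n)" and h: "\<And>n. hom (X (Suc n)) (X n) (f n)"
  shows "submod (prodn X) (dn X f)"
proof -
  let ?d = "\<lambda>x. \<lambda>n. mdiff (X n) (x n) (f n (x (Suc n)))"
  have c: "\<And>x n. \<forall>n. x n \<in> mcarrier (X n) \<Longrightarrow> mdiff (X n) (x n) (f n (x (Suc n))) \<in> mcarrier (X n)"
    using md[OF m] hom_c[OF m m h] by blast
  have a: "\<And>x y n. \<forall>n. x n \<in> mcarrier (X n) \<Longrightarrow> \<forall>n. y n \<in> mcarrier (X n) \<Longrightarrow>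
      mdiff (X n) (madd (X n) (x n) (y n)) (f n (madd (X (Suc n)) (x (Suc n)) (y (Suc n)))) =
         madd (X n) (mdiff (X n) (x n) (f n (x (Suc n)))) (mdiff (X n) (y n) (f n (y (Suc n))))"
  proof -
    fix x y n assume x: "\<forall>n. x n \<in> mcarrier (X n)" and y: "\<forall>n. y n \<in> mcarrier (X n)"
    show "mdiff (X n) (madd (X n) (x n) (y n)) (f n (madd (X (Suc n)) (x (Suc n)) (y (Suc n)))) =
         madd (X n) (mdiff (X n) (x n) (f n (x (Suc n)))) (mdiff (X n) (y n) (f n (y (Suc n))))"
        using hom_add[OF m m h x[rule_format] y[rule_format]]
          diff_add_distrib[OF m x[rule_format] y[rule_format] hom_c[OF m m h x[rule_format]] hom_c[OF m m h y[rule_format]]]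
        by simp
  qed
  have sm: "\<And>x r n. \<forall>n. x n \<in> mcarrier (X n) \<Longrightarrow>
      mdiff (X n) (msmult (X n) r (x n)) (f n (msmult (X (Suc n)) r (x (Suc n)))) =
         msmult (X n) r (mdiff (X n) (x n) (f n (x (Suc n))))"
  proof -
    fix x r n assume x: "\<forall>n. x n \<in> mcarrier (X n)"
    show "mdiff (X n) (msmult (X n) r (x n)) (f n (msmult (X (Suc n)) r (x (Suc n)))) =
         msmult (X n) r (mdiff (X n) (x n) (f n (x (Suc n))))"
        using hom_sm[OF m m h x[rule_format]]
          diff_sm_distrib[OF m x[rule_format] hom_c[OF m m h x[rule_format]]]
        by simp
  qed
  have "hom (prodn X) (prodn X) ?d"
    unfolding hom_def prodn_simps using c a sm by (simp add: fun_eq_iff)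
  thus ?thesis unfolding dn_def using hom_img_submod[of "prodn X" "prodn X" ?d] submod_full
    prodn_is_mod m by blast
qed

lemma dz_submod: assumes m: "\<And>n. is_mod (X n)" and h: "\<And>n. hom (X (n - 1)) (X n) (f n)"
  shows "submod (prodz X) ((\<lambda>x. \<lambda>s. mdiff (X s) (x s) (f s (x (s - 1)))) ` mcarrier (prodz X))"
proof -
  let ?d = "\<lambda>x. \<lambda>n. mdiff (X n) (x n) (f n (x (n - 1)))"
  have c: "\<And>x n. \<forall>n. x n \<in> mcarrier (X n) \<Longrightarrow> mdiff (X n) (x n) (f n (x (n - 1))) \<in> mcarrier (X n)"
    using md[OF m] hom_c[OF m m h] by blast
  have a: "\<And>x y n. \<forall>n. x n \<in> mcarrier (X n) \<Longrightarrow> \<forall>n. y n \<in> mcarrier (X n) \<Longrightarrow>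
      mdiff (X n) (madd (X n) (x n) (y n)) (f n (madd (X (n - 1)) (x (n - 1)) (y (n - 1)))) =
         madd (X n) (mdiff (X n) (x n) (f n (x (n - 1)))) (mdiff (X n) (y n) (f n (y (n - 1))))"
  proof -
    fix x y n assume x: "\<forall>n. x n \<in> mcarrier (X n)" and y: "\<forall>n. y n \<in> mcarrier (X n)"
    show "mdiff (X n) (madd (X n) (x n) (y n)) (f n (madd (X (n - 1)) (x (n - 1)) (y (n - 1)))) =
         madd (X n) (mdiff (X n) (x n) (f n (x (n - 1)))) (mdiff (X n) (y n) (f n (y (n - 1))))"
        using hom_add[OF m m h x[rule_format] y[rule_format]]
          diff_add_distrib[OF m x[rule_format] y[rule_format] hom_c[OF m m h x[rule_format]] hom_c[OF m m h y[rule_format]]]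
        by simp
  qed
  have sm: "\<And>x r n. \<forall>n. x n \<in> mcarrier (X n) \<Longrightarrow>
      mdiff (X n) (msmult (X n) r (x n)) (f n (msmult (X (n - 1)) r (x (n - 1)))) =
         msmult (X n) r (mdiff (X n) (x n) (f n (x (n - 1))))"
  proof -
    fix x r n assume x: "\<forall>n. x n \<in> mcarrier (X n)"
    show "mdiff (X n) (msmult (X n) r (x n)) (f n (msmult (X (n - 1)) r (x (n - 1)))) =
         msmult (X n) r (mdiff (X n) (x n) (f n (x (n - 1))))"
        using hom_sm[OF m m h x[rule_format]]
          diff_sm_distrib[OF m x[rule_format] hom_c[OF m m h x[rule_format]]]
        by simp
  qed
  have "hom (prodz X) (prodz X) ?d"
    unfolding hom_def prodz_simps using c a sm by (simp add: fun_eq_iff)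
  thus ?thesis using hom_img_submod[of "prodz X" "prodz X" ?d] submod_full
    prodz_is_mod m by blast
qed




lemma fpow_add: "fpow f (j + k) s = fpow f j s \<circ> fpow f k (s - int j)"
proof (induction j arbitrary: s)
  case 0 thus ?case by simp
next
  case (Suc j)
  have "fpow f (Suc j + k) s = f s \<circ> fpow f (j + k) (s - 1)" by simp
  also have "\<dots> = f s \<circ> (fpow f j (s - 1) \<circ> fpow f k (s - 1 - int j))" using Suc by presburger
  also have "s - 1 - int j = s - int (Suc j)" by simp
  finally show ?case by (simp add: comp_assoc)
qed

lemma fpow_Suc2: "fpow f (Suc k) s = fpow f k s \<circ> f (s - int k)"
  using fpow_add[of f k 1 s] by (simp add: comp_def)

lemma fpow_Suc2_app: "fpow f (Suc k) s x = fpow f k s (f (s - int k) x)"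
  using fpow_Suc2[of f k s] by simp

lemma fpow_hom: assumes m: "\<And>s. is_mod (X s)" and h: "\<And>s. hom (X (s - 1)) (X s) (f s)"
  shows "hom (X (s - int k)) (X s) (fpow f k s)"
proof (induction k arbitrary: s)
  case 0 thus ?case by (simp add: hom_def)
next
  case (Suc k)
  have h1: "hom (X (s - 1 - int k)) (X (s - 1)) (fpow f k (s - 1))" using Suc .
  have e: "s - 1 - int k = s - int (Suc k)" by simp
  show ?case unfolding fpow.simps hom_def using h1[unfolded e] h[of s] m
    by (simp add: hom_def)
qed

definition T :: "(int \<Rightarrow> 'a \<Rightarrow> 'a) \<Rightarrow> int \<Rightarrow> int \<Rightarrow> 'a \<Rightarrow> 'a" where
  "T f u s = fpow f (nat (u - s)) u"

lemma T_self[simp]: "T f s s x = x" unfolding T_def by simp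

lemma T_trans: assumes "s \<le> u" "u \<le> v" shows "T f v u (T f u s x) = T f v s x"
proof -
  have n: "nat (v - s) = nat (v - u) + nat (u - s)" using assms by simp
  have e: "v - int (nat (v - u)) = u" using assms by simp
  show ?thesis unfolding T_def n fpow_add e by simp
qed

lemma T_step: assumes "s \<le> u" shows "T f (u + 1) s x = f (u + 1) (T f u s x)"
proof -
  have "nat (u + 1 - s) = Suc (nat (u - s))" using assms by simp
  thus ?thesis unfolding T_def by simp
qed

lemma T_step_low: assumes "s \<le> u" shows "T f u (s - 1) x = T f u s (f s x)"
proof -
  have "nat (u - (s - 1)) = Suc (nat (u - s))" using assms by simp
  moreover have "u - int (nat (u - s)) = s" using assms by simp
  ultimately show ?thesis unfolding T_def by (simp only: fpow_Suc2_app)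
qed

context fixes X :: "int \<Rightarrow> ('r::ring_1, 'a) rmod" and f
  assumes m: "\<And>s. is_mod (X s)" and h: "\<And>s. hom (X (s - 1)) (X s) (f s)"
begin

lemma T_hom: "s \<le> u \<Longrightarrow> hom (X s) (X u) (T f u s)"
  using fpow_hom[of X f u "nat (u - s)", OF m h] unfolding T_def by simp

lemma T_c: "s \<le> u \<Longrightarrow> x \<in> mcarrier (X s) \<Longrightarrow> T f u s x \<in> mcarrier (X u)"
  by (rule hom_c[OF m m T_hom])
lemma T_add: "s \<le> u \<Longrightarrow> x \<in> mcarrier (X s) \<Longrightarrow> y \<in> mcarrier (X s) \<Longrightarrow>
   T f u s (madd (X s) x y) = madd (X u) (T f u s x) (T f u s y)"
  by (rule hom_add[OF m m T_hom])
lemma T_sm: "s \<le> u \<Longrightarrow> x \<in> mcarrier (X s) \<Longrightarrow>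
   T f u s (msmult (X s) r x) = msmult (X u) r (T f u s x)"
  by (rule hom_sm[OF m m T_hom])
lemma T_zero: "s \<le> u \<Longrightarrow> T f u s (mzero (X s)) = mzero (X u)"
  by (rule hom_zero[OF m m T_hom])

lemma ccls_alt: "ccls X f s x = {(s', x'). x' \<in> mcarrier (X s') \<and>
      (\<exists>u. u \<ge> s \<and> u \<ge> s' \<and> T f u s x = T f u s' x')}"
  unfolding ccls_def T_def ..

definition cR where "cR s x s' x' \<longleftrightarrow> (\<exists>u. u \<ge> s \<and> u \<ge> s' \<and> T f u s x = T f u s' x')"

lemma cR_up: assumes "cR s x s' x'" "x \<in> mcarrier (X s)" "x' \<in> mcarrier (X s')"
  shows "\<exists>u0 \<ge> s. u0 \<ge> s' \<and> (\<forall>w \<ge> u0. T f w s x = T f w s' x')"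
proof -
  obtain u where u: "u \<ge> s" "u \<ge> s'" "T f u s x = T f u s' x'" using assms unfolding cR_def by blast
  have "\<forall>w \<ge> u. T f w s x = T f w s' x'"
  proof (intro allI impI)
    fix w assume "u \<le> w"
    thus "T f w s x = T f w s' x'" using T_trans[of s u w f x] T_trans[of s' u w f x'] u by simp
  qed
  thus ?thesis using u by blast
qed

lemma cR_trans: assumes "cR s x s' x'" "cR s' x' s'' x''" "x \<in> mcarrier (X s)" "x' \<in> mcarrier (X s')"
  "x'' \<in> mcarrier (X s'')" shows "cR s x s'' x''"
proof -
  obtain u where u: "u \<ge> s" "u \<ge> s'" "\<forall>w \<ge> u. T f w s x = T f w s' x'" using cR_up assms by blast
  obtain v where v: "v \<ge> s'" "v \<ge> s''" "\<forall>w \<ge> v. T f w s' x' = T f w s'' x''" using cR_up assms by blast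
  show ?thesis unfolding cR_def using u v by (intro exI[of _ "max u v"]) auto
qed

lemma cR_sym: "cR s x s' x' \<Longrightarrow> cR s' x' s x" unfolding cR_def by metis
lemma cR_refl: "cR s x s x" unfolding cR_def by auto

lemma ccls_cR: "ccls X f s x = {(s', x'). x' \<in> mcarrier (X s') \<and> cR s x s' x'}"
  unfolding ccls_alt cR_def ..

lemma ccls_self: "x \<in> mcarrier (X s) \<Longrightarrow> (s, x) \<in> ccls X f s x"
  unfolding ccls_cR using cR_refl by simp

lemma ccls_eq_iff: assumes "x \<in> mcarrier (X s)" "x' \<in> mcarrier (X s')"
  shows "ccls X f s x = ccls X f s' x' \<longleftrightarrow> cR s x s' x'"
proof
  assume "ccls X f s x = ccls X f s' x'"
  hence "(s', x') \<in> ccls X f s x" using ccls_self assms by blast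
  thus "cR s x s' x'" unfolding ccls_cR by simp
next
  assume c: "cR s x s' x'"
  show "ccls X f s x = ccls X f s' x'"
    unfolding ccls_cR using c cR_sym cR_trans assms by blast
qed

lemma rep_ccls: assumes "x \<in> mcarrier (X s)"
  shows "snd (rep (ccls X f s x)) \<in> mcarrier (X (fst (rep (ccls X f s x))))"
    "cR s x (fst (rep (ccls X f s x))) (snd (rep (ccls X f s x)))"
proof -
  have "rep (ccls X f s x) \<in> ccls X f s x" unfolding rep_def by (rule someI, rule ccls_self[OF assms])
  thus "snd (rep (ccls X f s x)) \<in> mcarrier (X (fst (rep (ccls X f s x))))"
    "cR s x (fst (rep (ccls X f s x))) (snd (rep (ccls X f s x)))"
    unfolding ccls_cR by auto
qed

lemma ccls_T: "s \<le> u \<Longrightarrow> x \<in> mcarrier (X s) \<Longrightarrow> ccls X f u (T f u s x) = ccls X f s x"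
  using ccls_eq_iff[of "T f u s x" u x s] T_c unfolding cR_def by (auto intro!: exI[of _ u])

lemma colim_madd_raw: "madd (colim X f) P Q =
   ccls X f (max (fst (rep P)) (fst (rep Q)))
     (madd (X (max (fst (rep P)) (fst (rep Q))))
        (T f (max (fst (rep P)) (fst (rep Q))) (fst (rep P)) (snd (rep P)))
        (T f (max (fst (rep P)) (fst (rep Q))) (fst (rep Q)) (snd (rep Q))))"
  unfolding colim_def rmod.select_convs Let_def T_def by (simp add: case_prod_beta)

lemma colim_sm_raw: "msmult (colim X f) r P = ccls X f (fst (rep P)) (msmult (X (fst (rep P))) r (snd (rep P)))"
  unfolding colim_def rmod.select_convs Let_def by (simp add: case_prod_beta)

lemma colim_carrier: "mcarrier (colim X f) = {ccls X f s x | s x. x \<in> mcarrier (X s)}"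
  unfolding colim_def rmod.select_convs ..
lemma colim_zero: "mzero (colim X f) = ccls X f 0 (mzero (X 0))"
  unfolding colim_def rmod.select_convs ..

lemma cR_T: assumes "cR s x s' x'" "x \<in> mcarrier (X s)" "x' \<in> mcarrier (X s')" "v \<ge> s" "v \<ge> s'"
  shows "cR v (T f v s x) v (T f v s' x')"
proof -
  obtain u where u: "u \<ge> s" "u \<ge> s'" "\<forall>w \<ge> u. T f w s x = T f w s' x'" using cR_up assms by blast
  let ?w = "max u v"
  have "T f ?w v (T f v s x) = T f ?w s x" using T_trans[of s v ?w f x] assms by simp
  also have "\<dots> = T f ?w s' x'" using u by simp
  also have "\<dots> = T f ?w v (T f v s' x')" using T_trans[of s' v ?w f x'] assms by simp
  finally show ?thesis unfolding cR_def by (intro exI[of _ ?w]) simp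
qed

lemma T_add2: assumes "s1 \<le> u" "s2 \<le> u" "u \<le> z" "x \<in> mcarrier (X s1)" "y \<in> mcarrier (X s2)"
  shows "T f z u (madd (X u) (T f u s1 x) (T f u s2 y)) = madd (X z) (T f z s1 x) (T f z s2 y)"
  using T_add[of u z "T f u s1 x" "T f u s2 y"] T_c assms T_trans[of s1 u z f x] T_trans[of s2 u z f y] by simp

lemma colim_add: assumes x: "x \<in> mcarrier (X s)" and y: "y \<in> mcarrier (X s')"
  and v: "v \<ge> s" "v \<ge> s'"
  shows "madd (colim X f) (ccls X f s x) (ccls X f s' y) = ccls X f v (madd (X v) (T f v s x) (T f v s' y))"
proof -
  define s1 x1 s2 y1 where "s1 = fst (rep (ccls X f s x))" "x1 = snd (rep (ccls X f s x))"
    "s2 = fst (rep (ccls X f s' y))" "y1 = snd (rep (ccls X f s' y))"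
  have r: "x1 \<in> mcarrier (X s1)" "cR s x s1 x1" "y1 \<in> mcarrier (X s2)" "cR s' y s2 y1"
    using rep_ccls[OF x] rep_ccls[OF y] unfolding s1_x1_s2_y1_def by auto
  define u where "u = max s1 s2"
  have L: "madd (colim X f) (ccls X f s x) (ccls X f s' y) = ccls X f u (madd (X u) (T f u s1 x1) (T f u s2 y1))"
    unfolding colim_madd_raw s1_x1_s2_y1_def u_def ..
  obtain u1 where u1: "\<forall>w \<ge> u1. T f w s x = T f w s1 x1" using cR_up[OF r(2) x r(1)] by blast
  obtain u2 where u2: "\<forall>w \<ge> u2. T f w s' y = T f w s2 y1" using cR_up[OF r(4) y r(3)] by blast
  define z where "z = max (max u1 u2) (max u v)"
  have zz: "z \<ge> u1" "z \<ge> u2" "z \<ge> u" "z \<ge> v" "u \<ge> s1" "u \<ge> s2" unfolding z_def u_def by auto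
  have e1: "T f z u (madd (X u) (T f u s1 x1) (T f u s2 y1)) = madd (X z) (T f z s1 x1) (T f z s2 y1)"
    using T_add2 zz r by simp
  have e2: "T f z v (madd (X v) (T f v s x) (T f v s' y)) = madd (X z) (T f z s x) (T f z s' y)"
    using T_add2 zz v x y by simp
  have "cR u (madd (X u) (T f u s1 x1) (T f u s2 y1)) v (madd (X v) (T f v s x) (T f v s' y))"
    unfolding cR_def using e1 e2 u1 u2 zz by (intro exI[of _ z]) auto
  moreover have "madd (X u) (T f u s1 x1) (T f u s2 y1) \<in> mcarrier (X u)"
    using ma[OF m] T_c zz r by simp
  moreover have "madd (X v) (T f v s x) (T f v s' y) \<in> mcarrier (X v)"
    using ma[OF m] T_c v x y by simp
  ultimately show ?thesis unfolding L using ccls_eq_iff by blast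
qed

lemma colim_sm: assumes x: "x \<in> mcarrier (X s)"
  shows "msmult (colim X f) r (ccls X f s x) = ccls X f s (msmult (X s) r x)"
proof -
  define s1 x1 where "s1 = fst (rep (ccls X f s x))" "x1 = snd (rep (ccls X f s x))"
  have r: "x1 \<in> mcarrier (X s1)" "cR s x s1 x1"
    using rep_ccls[OF x] unfolding s1_x1_def by auto
  have L: "msmult (colim X f) r (ccls X f s x) = ccls X f s1 (msmult (X s1) r x1)"
    unfolding colim_sm_raw s1_x1_def ..
  obtain u where u: "u \<ge> s" "u \<ge> s1" "T f u s x = T f u s1 x1" using r unfolding cR_def by blast
  have "cR s1 (msmult (X s1) r x1) s (msmult (X s) r x)"
    unfolding cR_def using u T_sm r x by (intro exI[of _ u]) simp
  thus ?thesis unfolding L using ccls_eq_iff ms[OF m] r x by blast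
qed

lemma ccls_zero_iff: assumes x: "x \<in> mcarrier (X s)"
  shows "ccls X f s x = mzero (colim X f) \<longleftrightarrow> (\<exists>u \<ge> s. T f u s x = mzero (X u))"
proof -
  have "ccls X f s x = mzero (colim X f) \<longleftrightarrow> cR s x 0 (mzero (X 0))"
    unfolding colim_zero using ccls_eq_iff x mz[OF m] by blast
  also have "\<dots> \<longleftrightarrow> (\<exists>u \<ge> s. T f u s x = mzero (X u))"
  proof
    assume "cR s x 0 (mzero (X 0))"
    then obtain u where "u \<ge> s" "u \<ge> 0" "T f u s x = T f u 0 (mzero (X 0))" unfolding cR_def by blast
    thus "\<exists>u \<ge> s. T f u s x = mzero (X u)" using T_zero by auto
  next
    assume "\<exists>u \<ge> s. T f u s x = mzero (X u)"
    then obtain u where u: "u \<ge> s" "T f u s x = mzero (X u)" by blast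
    define w where "w = max u 0"
    have "T f w s x = T f w u (T f u s x)" using T_trans[of s u w f x] u unfolding w_def by simp
    also have "\<dots> = mzero (X w)" using u T_zero unfolding w_def by simp
    also have "\<dots> = T f w 0 (mzero (X 0))" using T_zero unfolding w_def by simp
    finally show "cR s x 0 (mzero (X 0))" unfolding cR_def w_def using u by (intro exI[of _ "max u 0"]) auto
  qed
  finally show ?thesis .
qed

lemma colim_in: "x \<in> mcarrier (X s) \<Longrightarrow> ccls X f s x \<in> mcarrier (colim X f)"
  unfolding colim_carrier by blast

lemma colim_add_same: "a \<in> mcarrier (X v) \<Longrightarrow> b \<in> mcarrier (X v) \<Longrightarrow>
  madd (colim X f) (ccls X f v a) (ccls X f v b) = ccls X f v (madd (X v) a b)"
  using colim_add[of a v b v v] by simp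

lemma colim_elem: "P \<in> mcarrier (colim X f) \<Longrightarrow> \<exists>s x. x \<in> mcarrier (X s) \<and> P = ccls X f s x"
  unfolding colim_carrier by blast

lemma lift_to: "x \<in> mcarrier (X s) \<Longrightarrow> s \<le> v \<Longrightarrow> ccls X f s x = ccls X f v (T f v s x) \<and> T f v s x \<in> mcarrier (X v)"
  using ccls_T T_c by simp

lemma common2: assumes "P \<in> mcarrier (colim X f)" "Q \<in> mcarrier (colim X f)"
  shows "\<exists>v a b. a \<in> mcarrier (X v) \<and> b \<in> mcarrier (X v) \<and> P = ccls X f v a \<and> Q = ccls X f v b \<and> v \<ge> 0"
proof -
  obtain s1 x1 s2 x2 where e: "x1 \<in> mcarrier (X s1)" "P = ccls X f s1 x1" "x2 \<in> mcarrier (X s2)" "Q = ccls X f s2 x2"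
    using colim_elem assms by metis
  define v where "v = max 0 (max s1 s2)"
  have "v \<ge> s1" "v \<ge> s2" "v \<ge> 0" unfolding v_def by auto
  hence "T f v s1 x1 \<in> mcarrier (X v) \<and> T f v s2 x2 \<in> mcarrier (X v) \<and> P = ccls X f v (T f v s1 x1) \<and> Q = ccls X f v (T f v s2 x2) \<and> v \<ge> 0"
    using lift_to[OF e(1), of v] lift_to[OF e(3), of v] e by simp
  thus ?thesis by blast
qed

lemma common3: assumes "P \<in> mcarrier (colim X f)" "Q \<in> mcarrier (colim X f)" "R \<in> mcarrier (colim X f)"
  shows "\<exists>v a b c. a \<in> mcarrier (X v) \<and> b \<in> mcarrier (X v) \<and> c \<in> mcarrier (X v) \<and>
     P = ccls X f v a \<and> Q = ccls X f v b \<and> R = ccls X f v c"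
proof -
  obtain s1 x1 s2 x2 s3 x3 where e: "x1 \<in> mcarrier (X s1)" "P = ccls X f s1 x1" "x2 \<in> mcarrier (X s2)" "Q = ccls X f s2 x2"
     "x3 \<in> mcarrier (X s3)" "R = ccls X f s3 x3"
    using colim_elem assms by metis
  define v where "v = max s3 (max s1 s2)"
  have "v \<ge> s1" "v \<ge> s2" "v \<ge> s3" unfolding v_def by auto
  hence "T f v s1 x1 \<in> mcarrier (X v) \<and> T f v s2 x2 \<in> mcarrier (X v) \<and> T f v s3 x3 \<in> mcarrier (X v) \<and>
    P = ccls X f v (T f v s1 x1) \<and> Q = ccls X f v (T f v s2 x2) \<and> R = ccls X f v (T f v s3 x3)"
    using lift_to[OF e(1), of v] lift_to[OF e(3), of v] lift_to[OF e(5), of v] e by simp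
  thus ?thesis by blast
qed

lemma colim_zero_lift: "v \<ge> 0 \<Longrightarrow> mzero (colim X f) = ccls X f v (mzero (X v))"
  unfolding colim_zero using lift_to[OF mz[OF m], of 0 v] T_zero by simp

lemma colim_is_mod: "is_mod (colim X f)"
  unfolding is_mod_def
proof (intro conjI ballI allI)
  show "mzero (colim X f) \<in> mcarrier (colim X f)" unfolding colim_zero by (rule colim_in[OF mz[OF m]])
next
  fix P Q assume "P \<in> mcarrier (colim X f)" "Q \<in> mcarrier (colim X f)"
  then obtain v a b where "a \<in> mcarrier (X v)" "b \<in> mcarrier (X v)" "P = ccls X f v a" "Q = ccls X f v b"
    using common2 by blast
  thus "madd (colim X f) P Q \<in> mcarrier (colim X f)" using colim_add_same colim_in ma[OF m] by simp
  show "madd (colim X f) P Q = madd (colim X f) Q P"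
    using colim_add_same add_comm[OF m] \<open>a \<in> _\<close> \<open>b \<in> _\<close> \<open>P = _\<close> \<open>Q = _\<close> by simp
  show "msmult (colim X f) r (madd (colim X f) P Q) =
       madd (colim X f) (msmult (colim X f) r P) (msmult (colim X f) r Q)" for r
    using colim_add_same colim_sm sm_add[OF m] \<open>a \<in> _\<close> \<open>b \<in> _\<close> \<open>P = _\<close> \<open>Q = _\<close> ma[OF m] ms[OF m] by simp
next
  fix r P assume "P \<in> mcarrier (colim X f)"
  then obtain s x where "x \<in> mcarrier (X s)" "P = ccls X f s x" using colim_elem by blast
  thus "msmult (colim X f) r P \<in> mcarrier (colim X f)" using colim_sm colim_in ms[OF m] by simp
next
  fix P Q R assume "P \<in> mcarrier (colim X f)" "Q \<in> mcarrier (colim X f)" "R \<in> mcarrier (colim X f)"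
  then obtain v a b c where "a \<in> mcarrier (X v)" "b \<in> mcarrier (X v)" "c \<in> mcarrier (X v)"
    "P = ccls X f v a" "Q = ccls X f v b" "R = ccls X f v c"
    using common3 by blast
  thus "madd (colim X f) (madd (colim X f) P Q) R = madd (colim X f) P (madd (colim X f) Q R)"
    using colim_add_same add_assoc[OF m] ma[OF m] by simp
next
  fix P assume "P \<in> mcarrier (colim X f)"
  then obtain v a b where "a \<in> mcarrier (X v)" "b \<in> mcarrier (X v)" "P = ccls X f v a" "v \<ge> 0"
    using common2 by blast
  thus "madd (colim X f) (mzero (colim X f)) P = P"
    using colim_add_same colim_zero_lift mz[OF m] zero_l[OF m] by simp
  show "\<exists>Q\<in>mcarrier (colim X f). madd (colim X f) P Q = mzero (colim X f)"
    using colim_add_same colim_zero_lift mn[OF m] add_neg[OF m] colim_in \<open>a \<in> _\<close> \<open>P = _\<close> \<open>v \<ge> 0\<close>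
    by (intro bexI[of _ "ccls X f v (mneg (X v) a)"]) auto
  show "msmult (colim X f) 1 P = P" using colim_sm sm_one[OF m] \<open>a \<in> _\<close> \<open>P = _\<close> by simp
  show "msmult (colim X f) (r + q) P = madd (colim X f) (msmult (colim X f) r P) (msmult (colim X f) q P)" for r q
    using colim_sm colim_add_same sm_plus[OF m] ms[OF m] \<open>a \<in> _\<close> \<open>P = _\<close> by simp
  show "msmult (colim X f) (r * q) P = msmult (colim X f) r (msmult (colim X f) q P)" for r q
    using colim_sm sm_mult[OF m] ms[OF m] \<open>a \<in> _\<close> \<open>P = _\<close> by simp
qed

lemma cinj_hom: "hom (X s) (colim X f) (cinj X f s)"
  unfolding hom_def cinj_def using colim_in colim_add_same colim_sm by simp

end



lemma hom_preimage_submod: assumes m: "is_mod M" and n: "is_mod N" and h: "hom M N f" and s: "submod N S"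
  shows "submod M {x \<in> mcarrier M. f x \<in> S}"
  unfolding submod_def
proof (intro conjI ballI allI)
  show "mzero M \<in> {x \<in> mcarrier M. f x \<in> S}" using hom_zero[OF m n h] submod_zero[OF s] m by simp
  fix x y assume "x \<in> {x \<in> mcarrier M. f x \<in> S}" "y \<in> {x \<in> mcarrier M. f x \<in> S}"
  thus "madd M x y \<in> {x \<in> mcarrier M. f x \<in> S}" using hom_add[OF m n h] submod_add[OF s] ma[OF m] by simp
next
  fix r x assume "x \<in> {x \<in> mcarrier M. f x \<in> S}"
  thus "msmult M r x \<in> {x \<in> mcarrier M. f x \<in> S}" using hom_sm[OF m n h] submod_sm[OF s] ms[OF m] by simp
qed auto

lemma idx1[simp]: "(s::int) - (1 + int r) = s - 1 - int r" by simp
lemma idx2[simp]: "(s::int) - int r - 1 = s - 1 - int r" by simp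

lemma hom_id_sub: "S \<subseteq> S' \<Longrightarrow> hom (sub M S) (sub M S') id"
  unfolding hom_def by auto

lemma iso_quot_lemma:
  assumes mA: "is_mod A" and mE: "is_mod E" and mG: "is_mod G" and hb: "hom A E b" and hi: "hom A G i"
  shows "iso (quot (sub E (b ` mcarrier A)) (b ` kerm A G i)) (quot (sub G (i ` mcarrier A)) (i ` kerm A E b))"
proof -
  define Z where "Z = b ` mcarrier A"
  define B where "B = b ` kerm A G i"
  define S where "S = i ` mcarrier A"
  define N where "N = i ` kerm A E b"
  have sZ: "submod E Z" unfolding Z_def by (rule hom_img_submod[OF mA mE hb submod_full[OF mA]])
  have sS: "submod G S" unfolding S_def by (rule hom_img_submod[OF mA mG hi submod_full[OF mA]])
  have kc: "kerm A G i \<subseteq> mcarrier A" "kerm A E b \<subseteq> mcarrier A" unfolding kerm_def by auto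
  have sB: "submod (sub E Z) B" unfolding B_def Z_def
    by (rule submod_in_sub[OF hom_img_submod[OF mA mE hb hom_ker_submod[OF mA mG hi]]]) (use kc in auto)
  have sN: "submod (sub G S) N" unfolding N_def S_def
    by (rule submod_in_sub[OF hom_img_submod[OF mA mG hi hom_ker_submod[OF mA mE hb]]]) (use kc in auto)
  have mZ: "is_mod (sub E Z)" by (rule submod_sub_is_mod[OF mE sZ])
  have mS: "is_mod (sub G S)" by (rule submod_sub_is_mod[OF mG sS])
  have key: "b x \<in> B \<longleftrightarrow> i x \<in> N" if x: "x \<in> mcarrier A" for x
  proof
    assume "b x \<in> B"
    then obtain k where k: "k \<in> kerm A G i" "b x = b k" unfolding B_def by blast
    have kA: "k \<in> mcarrier A" using k kerm_def by fastforce
    have "b (mdiff A x k) = mzero E" using hom_diff[OF mA mE hb x kA] k mE hom_c[OF mA mE hb kA] by simp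
    hence "mdiff A x k \<in> kerm A E b" unfolding kerm_def using x kA mA by simp
    moreover have "i (mdiff A x k) = i x"
      using hom_diff[OF mA mG hi x kA] k hom_c[OF mA mG hi x] mG unfolding kerm_def by simp
    ultimately show "i x \<in> N" unfolding N_def by (metis image_eqI)
  next
    assume "i x \<in> N"
    then obtain k where k: "k \<in> kerm A E b" "i x = i k" unfolding N_def by blast
    have kA: "k \<in> mcarrier A" using k kerm_def by fastforce
    have "i (mdiff A x k) = mzero G" using hom_diff[OF mA mG hi x kA] k mG hom_c[OF mA mG hi kA] by simp
    hence "mdiff A x k \<in> kerm A G i" unfolding kerm_def using x kA mA by simp
    moreover have "b (mdiff A x k) = b x"
      using hom_diff[OF mA mE hb x kA] k hom_c[OF mA mE hb x] mE unfolding kerm_def by simp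
    ultimately show "b x \<in> B" unfolding B_def by (metis image_eqI)
  qed
  have beq: "coset (sub E Z) B (b x) = coset (sub E Z) B (b y) \<longleftrightarrow>
      coset (sub G S) N (i x) = coset (sub G S) N (i y)" if x: "x \<in> mcarrier A" and y: "y \<in> mcarrier A" for x y
  proof -
    have bz: "b x \<in> mcarrier (sub E Z)" "b y \<in> mcarrier (sub E Z)" unfolding Z_def using x y by auto
    have iz: "i x \<in> mcarrier (sub G S)" "i y \<in> mcarrier (sub G S)" unfolding S_def using x y by auto
    have "coset (sub E Z) B (b x) = coset (sub E Z) B (b y) \<longleftrightarrow> mdiff E (b x) (b y) \<in> B"
      using coset_eq_iff[OF mZ sB bz] by simp
    also have "mdiff E (b x) (b y) = b (mdiff A x y)" using hom_diff[OF mA mE hb x y] by simp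
    also have "b (mdiff A x y) \<in> B \<longleftrightarrow> i (mdiff A x y) \<in> N" using key[of "mdiff A x y"] mA x y by simp
    also have "i (mdiff A x y) = mdiff G (i x) (i y)" using hom_diff[OF mA mG hi x y] by simp
    also have "mdiff G (i x) (i y) \<in> N \<longleftrightarrow> coset (sub G S) N (i x) = coset (sub G S) N (i y)"
      using coset_eq_iff[OF mS sN iz] by simp
    finally show ?thesis .
  qed
  define phi where "phi X = coset (sub G S) N (i (SOME a. a \<in> mcarrier A \<and> b a = rep X))" for X
  have phi: "phi (coset (sub E Z) B (b a)) = coset (sub G S) N (i a)" if a: "a \<in> mcarrier A" for a
  proof -
    have ba: "b a \<in> mcarrier (sub E Z)" unfolding Z_def using a by simp
    let ?r = "rep (coset (sub E Z) B (b a))"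
    have r: "?r \<in> mcarrier (sub E Z)" "coset (sub E Z) B ?r = coset (sub E Z) B (b a)"
      using rep_coset[OF mZ sB ba] by auto
    hence "\<exists>a1. a1 \<in> mcarrier A \<and> b a1 = ?r" unfolding Z_def by auto
    hence a1: "(SOME a1. a1 \<in> mcarrier A \<and> b a1 = ?r) \<in> mcarrier A \<and> b (SOME a1. a1 \<in> mcarrier A \<and> b a1 = ?r) = ?r"
      by (rule someI_ex)
    hence "coset (sub E Z) B (b (SOME a1. a1 \<in> mcarrier A \<and> b a1 = ?r)) = coset (sub E Z) B (b a)"
      using r by simp
    hence "coset (sub G S) N (i (SOME a1. a1 \<in> mcarrier A \<and> b a1 = ?r)) = coset (sub G S) N (i a)"
      using beq a1 a by blast
    thus ?thesis unfolding phi_def .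
  qed
  have cZ: "mcarrier (quot (sub E Z) B) = (\<lambda>a. coset (sub E Z) B (b a)) ` mcarrier A"
    using quot_carrier[OF mZ sB] unfolding sub_simps image_image by (simp add: Z_def image_image)
  have cS: "mcarrier (quot (sub G S) N) = (\<lambda>a. coset (sub G S) N (i a)) ` mcarrier A"
    using quot_carrier[OF mS sN] unfolding sub_simps image_image by (simp add: S_def image_image)
  have "hom (quot (sub E Z) B) (quot (sub G S) N) phi"
    unfolding hom_def
  proof (intro conjI ballI allI)
    fix X assume "X \<in> mcarrier (quot (sub E Z) B)"
    then obtain a where a: "a \<in> mcarrier A" "X = coset (sub E Z) B (b a)" unfolding cZ by blast
    thus "phi X \<in> mcarrier (quot (sub G S) N)" unfolding cS using phi by simp
  next
    fix X Y assume "X \<in> mcarrier (quot (sub E Z) B)" "Y \<in> mcarrier (quot (sub E Z) B)"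
    then obtain a a' where a: "a \<in> mcarrier A" "X = coset (sub E Z) B (b a)"
      and a': "a' \<in> mcarrier A" "Y = coset (sub E Z) B (b a')" unfolding cZ by blast
    have bb: "b a \<in> mcarrier (sub E Z)" "b a' \<in> mcarrier (sub E Z)" unfolding Z_def using a a' by auto
    have ii: "i a \<in> mcarrier (sub G S)" "i a' \<in> mcarrier (sub G S)" unfolding S_def using a a' by auto
    have "madd (quot (sub E Z) B) X Y = coset (sub E Z) B (b (madd A a a'))"
      using quot_add[OF mZ sB bb] a a' hom_add[OF mA mE hb a(1) a'(1)] by simp
    hence "phi (madd (quot (sub E Z) B) X Y) = coset (sub G S) N (i (madd A a a'))"
      using phi ma[OF mA a(1) a'(1)] by simp
    also have "\<dots> = madd (quot (sub G S) N) (phi X) (phi Y)"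
      using quot_add[OF mS sN ii] a a' phi hom_add[OF mA mG hi a(1) a'(1)] by simp
    finally show "phi (madd (quot (sub E Z) B) X Y) = madd (quot (sub G S) N) (phi X) (phi Y)" .
  next
    fix r X assume "X \<in> mcarrier (quot (sub E Z) B)"
    then obtain a where a: "a \<in> mcarrier A" "X = coset (sub E Z) B (b a)" unfolding cZ by blast
    have bb: "b a \<in> mcarrier (sub E Z)" unfolding Z_def using a by auto
    have ii: "i a \<in> mcarrier (sub G S)" unfolding S_def using a by auto
    have "msmult (quot (sub E Z) B) r X = coset (sub E Z) B (b (msmult A r a))"
      using quot_sm[OF mZ sB bb] a hom_sm[OF mA mE hb a(1)] by simp
    hence "phi (msmult (quot (sub E Z) B) r X) = coset (sub G S) N (i (msmult A r a))"
      using phi ms[OF mA a(1)] by simp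
    also have "\<dots> = msmult (quot (sub G S) N) r (phi X)"
      using quot_sm[OF mS sN ii] a phi hom_sm[OF mA mG hi a(1)] by simp
    finally show "phi (msmult (quot (sub E Z) B) r X) = msmult (quot (sub G S) N) r (phi X)" .
  qed
  moreover have "bij_betw phi (mcarrier (quot (sub E Z) B)) (mcarrier (quot (sub G S) N))"
    unfolding bij_betw_def
  proof
    show "inj_on phi (mcarrier (quot (sub E Z) B))"
    proof (rule inj_onI)
      fix X Y assume "X \<in> mcarrier (quot (sub E Z) B)" "Y \<in> mcarrier (quot (sub E Z) B)" "phi X = phi Y"
      then obtain a a' where a: "a \<in> mcarrier A" "X = coset (sub E Z) B (b a)"
        and a': "a' \<in> mcarrier A" "Y = coset (sub E Z) B (b a')" and e: "phi X = phi Y" unfolding cZ by blast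
      thus "X = Y" using phi beq by simp
    qed
    show "phi ` mcarrier (quot (sub E Z) B) = mcarrier (quot (sub G S) N)"
      unfolding cZ cS image_image using phi by simp
  qed
  ultimately show ?thesis unfolding iso_def Z_def B_def S_def N_def by blast
qed

lemma quot_is_mod: assumes m: "is_mod M" and n: "submod M N" shows "is_mod (quot M N)"
proof -
  have el: "\<And>X. X \<in> mcarrier (quot M N) \<Longrightarrow> \<exists>x. x \<in> mcarrier M \<and> X = coset M N x"
    using quot_carrier[OF m n] by auto
  have inq: "\<And>x. x \<in> mcarrier M \<Longrightarrow> coset M N x \<in> mcarrier (quot M N)"
    using quot_carrier[OF m n] by auto
  note qa = quot_add[OF m n] and qs = quot_sm[OF m n] and qz = quot_zero[OF m n]
  show ?thesis unfolding is_mod_def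
  proof (intro conjI ballI allI)
    show "mzero (quot M N) \<in> mcarrier (quot M N)" unfolding qz by (rule inq[OF mz[OF m]])
  next
    fix X Y assume "X \<in> mcarrier (quot M N)" "Y \<in> mcarrier (quot M N)"
    then obtain x y where x: "x \<in> mcarrier M" "X = coset M N x" and y: "y \<in> mcarrier M" "Y = coset M N y"
      using el by blast
    show "madd (quot M N) X Y \<in> mcarrier (quot M N)" using x y qa inq ma[OF m] by simp
    show "madd (quot M N) X Y = madd (quot M N) Y X" using x y qa add_comm[OF m] by simp
    show "msmult (quot M N) r (madd (quot M N) X Y) = madd (quot M N) (msmult (quot M N) r X) (msmult (quot M N) r Y)" for r
      using x y qa qs sm_add[OF m] ma[OF m] ms[OF m] by simp
  next
    fix r X assume "X \<in> mcarrier (quot M N)"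
    then obtain x where x: "x \<in> mcarrier M" "X = coset M N x" using el by blast
    show "msmult (quot M N) r X \<in> mcarrier (quot M N)" using x qs inq ms[OF m] by simp
  next
    fix X Y Z assume "X \<in> mcarrier (quot M N)" "Y \<in> mcarrier (quot M N)" "Z \<in> mcarrier (quot M N)"
    then obtain x y z where x: "x \<in> mcarrier M" "X = coset M N x" and y: "y \<in> mcarrier M" "Y = coset M N y"
      and z: "z \<in> mcarrier M" "Z = coset M N z"
      using el by metis
    show "madd (quot M N) (madd (quot M N) X Y) Z = madd (quot M N) X (madd (quot M N) Y Z)"
      using x y z qa add_assoc[OF m] ma[OF m] by simp
  next
    fix X assume "X \<in> mcarrier (quot M N)"
    then obtain x where x: "x \<in> mcarrier M" "X = coset M N x" using el by blast
    show "madd (quot M N) (mzero (quot M N)) X = X" using x qa qz mz[OF m] zero_l[OF m x(1)] by simp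
    show "\<exists>Y\<in>mcarrier (quot M N). madd (quot M N) X Y = mzero (quot M N)"
      using x qa qz inq mn[OF m] add_neg[OF m] by (intro bexI[of _ "coset M N (mneg M x)"]) auto
    show "msmult (quot M N) 1 X = X" using x qs sm_one[OF m x(1)] by simp
    show "msmult (quot M N) (r + q) X = madd (quot M N) (msmult (quot M N) r X) (msmult (quot M N) q X)" for r q
      using x qs qa sm_plus[OF m] ms[OF m] by simp
    show "msmult (quot M N) (r * q) X = msmult (quot M N) r (msmult (quot M N) q X)" for r q
      using x qs sm_mult[OF m] ms[OF m] by simp
  qed
qed

locale ctx =
  fixes A :: "int \<Rightarrow> int \<Rightarrow> ('r::ring_1, 'a) rmod" and E :: "int \<Rightarrow> int \<Rightarrow> ('r, 'e) rmod"
    and alpha :: "int \<Rightarrow> int \<Rightarrow> 'a \<Rightarrow> 'a"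
    and beta :: "int \<Rightarrow> int \<Rightarrow> 'a \<Rightarrow> 'e"
    and gamma :: "int \<Rightarrow> int \<Rightarrow> 'e \<Rightarrow> 'a"
    and db dg :: int
  assumes ec: "exact_couple A E alpha beta gamma db dg"
    and cc_lim: "\<forall>t. trivial_mod (lim_int (\<lambda>s. A s t) (\<lambda>s. alpha s t))"
    and cc_Rlim: "\<forall>t. trivial_mod (Rlim_int (\<lambda>s. A s t) (\<lambda>s. alpha s t))"
    and RE: "\<forall>s t. trivial_mod (REinf A E alpha gamma dg s t)"
begin

lemma ecs: "(\<forall>s t. is_mod (A s t) \<and> is_mod (E s t))
   \<and> (\<forall>s t. hom (A (s - 1) t) (A s t) (alpha s t))
   \<and> (\<forall>s t. hom (A s t) (E s (t + db)) (beta s t))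
   \<and> (\<forall>s t. hom (E s t) (A (s - 1) (t + dg)) (gamma s t))
   \<and> (\<forall>s t. alpha s t ` mcarrier (A (s - 1) t) = kerm (A s t) (E s (t + db)) (beta s t))
   \<and> (\<forall>s t. beta s t ` mcarrier (A s t)
              = kerm (E s (t + db)) (A (s - 1) (t + db + dg)) (gamma s (t + db)))
   \<and> (\<forall>s t. gamma s t ` mcarrier (E s t)
              = kerm (A (s - 1) (t + dg)) (A s (t + dg)) (alpha s (t + dg)))"
  using ec unfolding exact_couple_def by (elim conjE) (intro conjI; assumption)

lemma mA[simp]: "is_mod (A s t)" using ecs by simp
lemma mE[simp]: "is_mod (E s t)" using ecs by simp
lemma hal: "hom (A (s - 1) t) (A s t) (alpha s t)" using conjunct1[OF conjunct2[OF ecs]] by simp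
lemma hbe: "hom (A s t) (E s (t + db)) (beta s t)" using conjunct1[OF conjunct2[OF conjunct2[OF ecs]]] by simp
lemma hga: "hom (E s t) (A (s - 1) (t + dg)) (gamma s t)" using conjunct1[OF conjunct2[OF conjunct2[OF conjunct2[OF ecs]]]] by simp
lemma ex_ab: "alpha s t ` mcarrier (A (s - 1) t) = kerm (A s t) (E s (t + db)) (beta s t)"
  using conjunct1[OF conjunct2[OF conjunct2[OF conjunct2[OF conjunct2[OF ecs]]]]] by simp
lemma ex_bg: "beta s t ` mcarrier (A s t) = kerm (E s (t + db)) (A (s - 1) (t + db + dg)) (gamma s (t + db))"
  using conjunct1[OF conjunct2[OF conjunct2[OF conjunct2[OF conjunct2[OF conjunct2[OF ecs]]]]]] by simp
lemma ex_ga: "gamma s t ` mcarrier (E s t) = kerm (A (s - 1) (t + dg)) (A s (t + dg)) (alpha s (t + dg))"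
  using conjunct2[OF conjunct2[OF conjunct2[OF conjunct2[OF conjunct2[OF conjunct2[OF ecs]]]]]] by simp

lemma hga': "hom (E s (t - dg)) (A (s - 1) t) (gamma s (t - dg))" using hga[of s "t - dg"] by simp
lemma ex_ga': "gamma s (t - dg) ` mcarrier (E s (t - dg)) = kerm (A (s - 1) t) (A s t) (alpha s t)"
  using ex_ga[of s "t - dg"] by simp

lemma al_c[simp]: "x \<in> mcarrier (A (s - 1) t) \<Longrightarrow> alpha s t x \<in> mcarrier (A s t)"
  by (rule hom_c[OF mA mA hal])

lemma apow_hom: "hom (A (s - int k) t) (A s t) (apow alpha t k s)"
  using fpow_hom[of "\<lambda>s. A s t" "\<lambda>s. alpha s t" s k, OF mA hal] .

lemma apow_c[simp]: "x \<in> mcarrier (A (s - int k) t) \<Longrightarrow> apow alpha t k s x \<in> mcarrier (A s t)"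
  by (rule hom_c[OF mA mA apow_hom])

definition im where "im t r s = apow alpha t r s ` mcarrier (A (s - int r) t)"
definition imInf where "imInf t s = {z \<in> mcarrier (A s t). \<forall>r. z \<in> im t r s}"

lemma im_submod: "submod (A s t) (im t r s)"
  unfolding im_def by (rule hom_img_submod[OF mA mA apow_hom submod_full[OF mA]])

lemma im_c: "x \<in> im t r s \<Longrightarrow> x \<in> mcarrier (A s t)"
  using submod_carrier[OF im_submod] .

lemma im_Suc_alpha: "x \<in> im t r (s - 1) \<Longrightarrow> alpha s t x \<in> im t (Suc r) s"
proof -
  assume "x \<in> im t r (s - 1)"
  then obtain y where y: "y \<in> mcarrier (A (s - 1 - int r) t)" "x = apow alpha t r (s - 1) y"
    unfolding im_def by blast
  have "alpha s t x = apow alpha t (Suc r) s y" using y by simp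
  moreover have "s - 1 - int r = s - int (Suc r)" by simp
  hence "y \<in> mcarrier (A (s - int (Suc r)) t)" using y(1) by metis
  ultimately show ?thesis unfolding im_def by (simp only: image_eqI)
qed

lemma im_mono: "x \<in> im t (Suc r) s \<Longrightarrow> x \<in> im t r s"
proof -
  assume "x \<in> im t (Suc r) s"
  then obtain y where y: "y \<in> mcarrier (A (s - int (Suc r)) t)" "x = apow alpha t (Suc r) s y"
    unfolding im_def by blast
  have e: "s - int r - 1 = s - int (Suc r)" by simp
  have "x = apow alpha t r s (alpha (s - int r) t y)" using y fpow_Suc2_app by metis
  moreover have "alpha (s - int r) t y \<in> mcarrier (A (s - int r) t)"
    using al_c[of y "s - int r" t] y e by simp
  ultimately show ?thesis unfolding im_def by blast
qed

lemma im_mono_le: "r \<le> r' \<Longrightarrow> x \<in> im t r' s \<Longrightarrow> x \<in> im t r s"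
proof (induction r' arbitrary: r)
  case 0 thus ?case by simp
next
  case (Suc r')
  thus ?case using im_mono by (cases "r = Suc r'") auto
qed

lemma im_alpha: "x \<in> im t r (s - 1) \<Longrightarrow> alpha s t x \<in> im t r s"
  using im_Suc_alpha im_mono by blast

lemma Zr_Suc: "Zr A E alpha gamma dg (Suc r) q (t - dg) = {x \<in> mcarrier (E q (t - dg)). gamma q (t - dg) x \<in> im t r (q - 1)}"
proof -
  have "q - int (Suc r) = q - 1 - int r" by simp
  thus ?thesis unfolding Zr_def im_def by simp
qed

lemma Zr_submod: "submod (E q (t - dg)) (Zr A E alpha gamma dg (Suc r) q (t - dg))"
  unfolding Zr_Suc by (rule hom_preimage_submod[OF mE mA hga' im_submod])

lemma RE_split: assumes e: "\<forall>n. e n \<in> Zr A E alpha gamma dg (Suc n) q (t - dg)"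
  shows "\<exists>c. (\<forall>n. c n \<in> Zr A E alpha gamma dg (Suc n) q (t - dg)) \<and>
      (\<forall>n. e n = mdiff (E q (t - dg)) (c n) (c (Suc n)))"
proof -
  define X where "X = (\<lambda>n. sub (E q (t - dg)) (Zr A E alpha gamma dg (n + 1) q (t - dg)))"
  have mX: "\<And>n. is_mod (X n)" unfolding X_def using submod_sub_is_mod[OF mE Zr_submod] by simp
  have sub: "\<And>n. Zr A E alpha gamma dg (Suc (Suc n)) q (t - dg) \<subseteq> Zr A E alpha gamma dg (Suc n) q (t - dg)"
    unfolding Zr_Suc using im_mono by auto
  have hX: "\<And>n. hom (X (Suc n)) (X n) ((\<lambda>n. id) n)" unfolding X_def using hom_id_sub[OF sub] by simp
  have tr: "trivial_mod (quot (prodn X) (dn X (\<lambda>n. id)))"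
    using RE unfolding REinf_def Rlim_nat_def X_def by simp
  have "mcarrier (prodn X) \<subseteq> dn X (\<lambda>n. id)"
    using tr quot_trivial_iff[OF prodn_is_mod[OF mX] dn_submod[of X "\<lambda>n. id", OF mX hX]] by simp
  moreover have "e \<in> mcarrier (prodn X)" using e unfolding X_def by simp
  ultimately obtain c where c: "c \<in> mcarrier (prodn X)" "e = (\<lambda>n. mdiff (X n) (c n) (id (c (Suc n))))"
    unfolding dn_def by blast
  thus ?thesis unfolding X_def by (intro exI[of _ c]) simp
qed

lemma TA_c: "s \<le> u \<Longrightarrow> x \<in> mcarrier (A s t) \<Longrightarrow> T (\<lambda>s. alpha s t) u s x \<in> mcarrier (A u t)"
  using T_c[of "\<lambda>s. A s t" "\<lambda>s. alpha s t" s u x] hal by simp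
lemma TA_add: "s \<le> u \<Longrightarrow> x \<in> mcarrier (A s t) \<Longrightarrow> y \<in> mcarrier (A s t) \<Longrightarrow>
   T (\<lambda>s. alpha s t) u s (madd (A s t) x y) = madd (A u t) (T (\<lambda>s. alpha s t) u s x) (T (\<lambda>s. alpha s t) u s y)"
  using T_add[of "\<lambda>s. A s t" "\<lambda>s. alpha s t" s u x y] hal by simp
lemma TA_sm: "s \<le> u \<Longrightarrow> x \<in> mcarrier (A s t) \<Longrightarrow>
   T (\<lambda>s. alpha s t) u s (msmult (A s t) r x) = msmult (A u t) r (T (\<lambda>s. alpha s t) u s x)"
  using T_sm[of "\<lambda>s. A s t" "\<lambda>s. alpha s t" s u x] hal by simp
lemma TA_zero: "s \<le> u \<Longrightarrow> T (\<lambda>s. alpha s t) u s (mzero (A s t)) = mzero (A u t)"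
  using T_zero[of "\<lambda>s. A s t" "\<lambda>s. alpha s t" s u] hal by simp
lemma TA_diff: "s \<le> u \<Longrightarrow> x \<in> mcarrier (A s t) \<Longrightarrow> y \<in> mcarrier (A s t) \<Longrightarrow>
   T (\<lambda>s. alpha s t) u s (mdiff (A s t) x y) = mdiff (A u t) (T (\<lambda>s. alpha s t) u s x) (T (\<lambda>s. alpha s t) u s y)"
  using TA_add TA_sm TA_c unfolding mdiff_def by simp

lemma imInf_surj: assumes z: "z \<in> imInf t q" shows "\<exists>y \<in> imInf t (q - 1). alpha q t y = z"
proof -
  have "\<forall>r. \<exists>u. u \<in> mcarrier (A (q - 1 - int r) t) \<and> apow alpha t (Suc r) q u = z"
  proof
    fix r
    have "z \<in> im t (Suc r) q" using z unfolding imInf_def by blast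
    thus "\<exists>u. u \<in> mcarrier (A (q - 1 - int r) t) \<and> apow alpha t (Suc r) q u = z"
      unfolding im_def by auto
  qed
  then obtain u where u: "\<And>r. u r \<in> mcarrier (A (q - 1 - int r) t)" "\<And>r. apow alpha t (Suc r) q (u r) = z"
    by metis
  have zc: "z \<in> mcarrier (A q t)" using z unfolding imInf_def by blast
  define v where "v r = apow alpha t r (q - 1) (u r)" for r
  have vc: "v r \<in> mcarrier (A (q - 1) t)" for r unfolding v_def using apow_c u(1) by simp
  have av: "alpha q t (v r) = z" for r unfolding v_def using u(2)[of r] by simp
  have vim: "v r \<in> im t r (q - 1)" for r unfolding v_def im_def using u(1) by simp
  define w where "w r = mdiff (A (q - 1) t) (v r) (v (Suc r))" for r
  have wc: "w r \<in> mcarrier (A (q - 1) t)" for r unfolding w_def using vc by simp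
  have wk: "w r \<in> kerm (A (q - 1) t) (A q t) (alpha q t)" for r
    unfolding w_def kerm_def using vc hom_diff[OF mA mA hal vc vc] av zc by simp
  have wim: "w r \<in> im t r (q - 1)" for r
    unfolding w_def using submod_diff[OF im_submod vim im_mono[OF vim]] .
  have "\<forall>r. \<exists>e. e \<in> mcarrier (E q (t - dg)) \<and> gamma q (t - dg) e = w r"
  proof
    fix r
    have "w r \<in> gamma q (t - dg) ` mcarrier (E q (t - dg))" using wk[of r] ex_ga'[of q t] by simp
    then obtain e0 where "e0 \<in> mcarrier (E q (t - dg))" "w r = gamma q (t - dg) e0" by (rule imageE)
    thus "\<exists>e. e \<in> mcarrier (E q (t - dg)) \<and> gamma q (t - dg) e = w r" by (intro exI[of _ e0]) simp
  qed
  then obtain e where e: "\<And>r. e r \<in> mcarrier (E q (t - dg))" "\<And>r. gamma q (t - dg) (e r) = w r" by metis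
  have eZ: "\<forall>r. e r \<in> Zr A E alpha gamma dg (Suc r) q (t - dg)" unfolding Zr_Suc using e wim by simp
  obtain c where c: "\<And>n. c n \<in> Zr A E alpha gamma dg (Suc n) q (t - dg)"
    "\<And>n. e n = mdiff (E q (t - dg)) (c n) (c (Suc n))"
    using RE_split[OF eZ] by metis
  have cc: "c n \<in> mcarrier (E q (t - dg))" "gamma q (t - dg) (c n) \<in> im t n (q - 1)" for n
    using c(1)[of n] unfolding Zr_Suc by auto
  have gc: "gamma q (t - dg) (c n) \<in> mcarrier (A (q - 1) t)" for n using hom_c[OF mE mA hga' cc(1)] .
  have gk: "alpha q t (gamma q (t - dg) (c n)) = mzero (A q t)" for n
    using ex_ga'[of q t] cc(1)[of n] unfolding kerm_def by blast
  define y where "y r = mdiff (A (q - 1) t) (v r) (gamma q (t - dg) (c r))" for r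
  have yc: "y r \<in> mcarrier (A (q - 1) t)" for r unfolding y_def using vc gc by simp
  have ystep: "y (Suc r) = y r" for r
  proof -
    have "mdiff (A (q - 1) t) (y r) (y (Suc r)) =
      mdiff (A (q - 1) t) (w r) (mdiff (A (q - 1) t) (gamma q (t - dg) (c r)) (gamma q (t - dg) (c (Suc r))))"
      unfolding y_def w_def using diff_diff_distrib[OF mA vc vc gc gc] by simp
    also have "\<dots> = mdiff (A (q - 1) t) (w r) (gamma q (t - dg) (e r))"
      using c(2)[of r] hom_diff[OF mE mA hga' cc(1) cc(1)] by simp
    also have "\<dots> = mzero (A (q - 1) t)" using e(2) wc by simp
    finally show ?thesis using diff_zero_iff[OF mA yc yc] by simp
  qed
  have yconst: "y r = y 0" for r by (induction r) (simp_all add: ystep)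
  have "y 0 \<in> imInf t (q - 1)"
    unfolding imInf_def
  proof (intro CollectI conjI allI)
    show "y 0 \<in> mcarrier (A (q - 1) t)" by (rule yc)
    fix r
    have "y r \<in> im t r (q - 1)" unfolding y_def by (rule submod_diff[OF im_submod vim cc(2)])
    thus "y 0 \<in> im t r (q - 1)" using yconst[of r] by simp
  qed
  moreover have "alpha q t (y 0) = z"
    unfolding y_def using hom_diff[OF mA mA hal vc gc] av gk zc by (simp add: mdiff_eq)
  ultimately show ?thesis by blast
qed

lemma imInf_c: "z \<in> imInf t q \<Longrightarrow> z \<in> mcarrier (A q t)" unfolding imInf_def by blast

lemma lim_zero: assumes x: "\<And>s. x s \<in> mcarrier (A s t)" and comp: "\<And>s. alpha s t (x (s - 1)) = x s"
  shows "x s = mzero (A s t)"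
proof -
  have "x \<in> mcarrier (lim_int (\<lambda>s. A s t) (\<lambda>s. alpha s t))" unfolding lim_int_def using x comp by simp
  moreover have "trivial_mod (lim_int (\<lambda>s. A s t) (\<lambda>s. alpha s t))" using cc_lim by blast
  ultimately have "x \<in> {mzero (lim_int (\<lambda>s. A s t) (\<lambda>s. alpha s t))}" unfolding trivial_mod_def by simp
  hence "x = mzero (lim_int (\<lambda>s. A s t) (\<lambda>s. alpha s t))" by simp
  hence "x = (\<lambda>s. mzero (A s t))" unfolding lim_int_def by simp
  thus ?thesis by simp
qed

lemma imInf_zero: assumes z: "z \<in> imInf t q" shows "z = mzero (A q t)"
proof -
  define W where "W = rec_nat z (\<lambda>k w. SOME y. y \<in> imInf t (q - 1 - int k) \<and> alpha (q - int k) t y = w)"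
  have W0: "W 0 = z" unfolding W_def by simp
  have WS: "W (Suc k) = (SOME y. y \<in> imInf t (q - 1 - int k) \<and> alpha (q - int k) t y = W k)" for k
    unfolding W_def by simp
  have P: "W k \<in> imInf t (q - int k) \<and> W (Suc k) \<in> imInf t (q - 1 - int k) \<and> alpha (q - int k) t (W (Suc k)) = W k" for k
  proof (induction k)
    case 0
    obtain y0 where "y0 \<in> imInf t (q - 1)" "alpha q t y0 = z" using imInf_surj[OF z] by blast
    hence "\<exists>y. y \<in> imInf t (q - 1 - int 0) \<and> alpha (q - int 0) t y = W 0" using W0 by (intro exI[of _ y0]) simp
    hence "W (Suc 0) \<in> imInf t (q - 1 - int 0) \<and> alpha (q - int 0) t (W (Suc 0)) = W 0"
      unfolding WS by (rule someI_ex)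
    thus ?case using z W0 by simp
  next
    case (Suc k)
    hence "W (Suc k) \<in> imInf t (q - int (Suc k))" by simp
    hence "\<exists>y. y \<in> imInf t (q - 1 - int (Suc k)) \<and> alpha (q - int (Suc k)) t y = W (Suc k)"
      using imInf_surj[of "W (Suc k)" t "q - int (Suc k)"] by (simp add: Bex_def)
    hence "W (Suc (Suc k)) \<in> imInf t (q - 1 - int (Suc k)) \<and> alpha (q - int (Suc k)) t (W (Suc (Suc k))) = W (Suc k)"
      unfolding WS[of "Suc k"] by (rule someI_ex)
    thus ?case using Suc by simp
  qed
  define x where "x s = (if s \<le> q then W (nat (q - s)) else T (\<lambda>s. alpha s t) s q z)" for s
  have xc: "x s \<in> mcarrier (A s t)" for s
  proof (cases "s \<le> q")
    case True
    hence "q - int (nat (q - s)) = s" by simp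
    hence "W (nat (q - s)) \<in> imInf t s" using conjunct1[OF P[of "nat (q - s)"]] by simp
    thus ?thesis unfolding x_def using True imInf_c by simp
  next
    case False thus ?thesis unfolding x_def using TA_c[of q s z t] imInf_c[OF z] by simp
  qed
  have comp: "alpha s t (x (s - 1)) = x s" for s
  proof -
    consider "s \<le> q" | "s = q + 1" | "s > q + 1" by linarith
    thus ?thesis
    proof cases
      case 1
      define k where "k = nat (q - s)"
      have "int (Suc k) = q - (s - 1)" unfolding k_def using 1 by simp
      hence nn: "nat (q - (s - 1)) = Suc k" by (metis nat_int)
      have e1: "x (s - 1) = W (Suc k)" unfolding x_def using 1 nn by simp
      have e2: "x s = W k" unfolding x_def k_def using 1 by simp
      have e3: "q - int k = s" unfolding k_def using 1 by simp
      show ?thesis unfolding e1 e2 using conjunct2[OF conjunct2[OF P[of k]]] e3 by simp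
    next
      case 2
      have "T (\<lambda>s. alpha s t) (q + 1) q z = alpha (q + 1) t (T (\<lambda>s. alpha s t) q q z)"
        by (rule T_step) simp
      moreover have "x (s - 1) = z" unfolding x_def using 2 W0 by simp
      moreover have "x s = T (\<lambda>s. alpha s t) (q + 1) q z" unfolding x_def using 2 by simp
      ultimately show ?thesis using 2 by simp
    next
      case 3
      have "T (\<lambda>s. alpha s t) (s - 1 + 1) q z = alpha (s - 1 + 1) t (T (\<lambda>s. alpha s t) (s - 1) q z)"
        by (rule T_step) (use 3 in simp)
      moreover have "x (s - 1) = T (\<lambda>s. alpha s t) (s - 1) q z" unfolding x_def using 3 by simp
      moreover have "x s = T (\<lambda>s. alpha s t) s q z" unfolding x_def using 3 by simp
      ultimately show ?thesis by simp
    qed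
  qed
  have "x q = mzero (A q t)" using lim_zero[OF xc comp] .
  thus ?thesis unfolding x_def using W0 by simp
qed

section \<open>A infinity\<close>

lemma Ainf_eq: "Ainf A alpha t = colim (\<lambda>s. A s t) (\<lambda>s. alpha s t)" unfolding Ainf_def ..
lemma iota_eq: "iota A alpha s t = ccls (\<lambda>s. A s t) (\<lambda>s. alpha s t) s"
  unfolding iota_def cinj_def ..

lemma mAi[simp]: "is_mod (Ainf A alpha t)"
  unfolding Ainf_eq using colim_is_mod[of "\<lambda>s. A s t" "\<lambda>s. alpha s t"] hal by simp

lemma io_hom: "hom (A s t) (Ainf A alpha t) (iota A alpha s t)"
  unfolding Ainf_eq iota_def using cinj_hom[of "\<lambda>s. A s t" "\<lambda>s. alpha s t" s] hal by simp

lemma io_c[simp]: "x \<in> mcarrier (A s t) \<Longrightarrow> iota A alpha s t x \<in> mcarrier (Ainf A alpha t)"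
  by (rule hom_c[OF mA mAi io_hom])
lemma io_add: "x \<in> mcarrier (A s t) \<Longrightarrow> y \<in> mcarrier (A s t) \<Longrightarrow>
  iota A alpha s t (madd (A s t) x y) = madd (Ainf A alpha t) (iota A alpha s t x) (iota A alpha s t y)"
  by (rule hom_add[OF mA mAi io_hom])
lemma io_sm: "x \<in> mcarrier (A s t) \<Longrightarrow>
  iota A alpha s t (msmult (A s t) r x) = msmult (Ainf A alpha t) r (iota A alpha s t x)"
  by (rule hom_sm[OF mA mAi io_hom])
lemma io_diff: "x \<in> mcarrier (A s t) \<Longrightarrow> y \<in> mcarrier (A s t) \<Longrightarrow>
  iota A alpha s t (mdiff (A s t) x y) = mdiff (Ainf A alpha t) (iota A alpha s t x) (iota A alpha s t y)"
  by (rule hom_diff[OF mA mAi io_hom])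
lemma io_zero[simp]: "iota A alpha s t (mzero (A s t)) = mzero (Ainf A alpha t)"
  by (rule hom_zero[OF mA mAi io_hom])

lemma io_T: "s \<le> u \<Longrightarrow> x \<in> mcarrier (A s t) \<Longrightarrow>
   iota A alpha u t (T (\<lambda>s. alpha s t) u s x) = iota A alpha s t x"
  unfolding iota_eq using ccls_T[of "\<lambda>s. A s t" "\<lambda>s. alpha s t" s u x] hal by simp

lemma io_alpha: "x \<in> mcarrier (A (s - 1) t) \<Longrightarrow> iota A alpha s t (alpha s t x) = iota A alpha (s - 1) t x"
proof -
  assume x: "x \<in> mcarrier (A (s - 1) t)"
  have "T (\<lambda>s. alpha s t) s (s - 1) x = alpha s t x" unfolding T_def by simp
  thus ?thesis using io_T[of "s - 1" s x t] x by simp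
qed

lemma io_apow: "x \<in> mcarrier (A (s - int r) t) \<Longrightarrow> iota A alpha s t (apow alpha t r s x) = iota A alpha (s - int r) t x"
proof -
  assume x: "x \<in> mcarrier (A (s - int r) t)"
  have "T (\<lambda>s. alpha s t) s (s - int r) x = apow alpha t r s x" unfolding T_def by simp
  thus ?thesis using io_T[of "s - int r" s x t] x by simp
qed

lemma io_zero_iff: "x \<in> mcarrier (A s t) \<Longrightarrow>
  iota A alpha s t x = mzero (Ainf A alpha t) \<longleftrightarrow> (\<exists>u \<ge> s. T (\<lambda>s. alpha s t) u s x = mzero (A u t))"
  unfolding iota_eq Ainf_eq using ccls_zero_iff[of "\<lambda>s. A s t" "\<lambda>s. alpha s t" x s] hal by simp

lemma Ainf_carrier: "mcarrier (Ainf A alpha t) = {iota A alpha s t x | s x. x \<in> mcarrier (A s t)}"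
  unfolding Ainf_eq iota_eq using colim_carrier[of "\<lambda>s. A s t" "\<lambda>s. alpha s t"] hal by simp

lemma Ainf_elem: "P \<in> mcarrier (Ainf A alpha t) \<Longrightarrow> \<exists>s x. x \<in> mcarrier (A s t) \<and> P = iota A alpha s t x"
  unfolding Ainf_carrier by blast

lemma F_eq: "Ffilt A alpha s t = iota A alpha s t ` mcarrier (A s t)" unfolding Ffilt_def ..

lemma F_submod: "submod (Ainf A alpha t) (Ffilt A alpha s t)"
  unfolding F_eq by (rule hom_img_submod[OF mA mAi io_hom submod_full[OF mA]])

lemma F_mono: "Ffilt A alpha (s - 1) t \<subseteq> Ffilt A alpha s t"
proof
  fix P assume "P \<in> Ffilt A alpha (s - 1) t"
  then obtain x where x: "x \<in> mcarrier (A (s - 1) t)" "P = iota A alpha (s - 1) t x" unfolding F_eq by blast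
  hence "P = iota A alpha s t (alpha s t x)" using io_alpha by simp
  thus "P \<in> Ffilt A alpha s t" unfolding F_eq using x(1) by simp
qed

lemma F_mono_le: "s \<le> u \<Longrightarrow> Ffilt A alpha s t \<subseteq> Ffilt A alpha u t"
proof -
  assume "s \<le> u"
  show ?thesis
  proof
    fix P assume "P \<in> Ffilt A alpha s t"
    then obtain x where x: "x \<in> mcarrier (A s t)" "P = iota A alpha s t x" unfolding F_eq by blast
    hence "P = iota A alpha u t (T (\<lambda>s. alpha s t) u s x)" using io_T \<open>s \<le> u\<close> by simp
    thus "P \<in> Ffilt A alpha u t" unfolding F_eq using TA_c \<open>s \<le> u\<close> x(1) by simp
  qed
qed

lemma part1: "(\<Union>s. Ffilt A alpha s t) = mcarrier (Ainf A alpha t)"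
proof
  show "(\<Union>s. Ffilt A alpha s t) \<subseteq> mcarrier (Ainf A alpha t)"
  proof (rule UN_least)
    fix s show "Ffilt A alpha s t \<subseteq> mcarrier (Ainf A alpha t)" using F_submod[of t s] unfolding submod_def by blast
  qed
  show "mcarrier (Ainf A alpha t) \<subseteq> (\<Union>s. Ffilt A alpha s t)"
  proof
    fix P assume "P \<in> mcarrier (Ainf A alpha t)"
    then obtain s x where "x \<in> mcarrier (A s t)" "P = iota A alpha s t x" using Ainf_elem by blast
    hence "P \<in> Ffilt A alpha s t" unfolding F_eq by simp
    thus "P \<in> (\<Union>s. Ffilt A alpha s t)" by blast
  qed
qed

lemma Rlim_A_split: assumes a: "\<And>s. a s \<in> mcarrier (A s t)"
  shows "\<exists>c. (\<forall>s. c s \<in> mcarrier (A s t)) \<and> (\<forall>s. a s = mdiff (A s t) (c s) (alpha s t (c (s - 1))))"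
proof -
  have tr: "trivial_mod (Rlim_int (\<lambda>s. A s t) (\<lambda>s. alpha s t))" using cc_Rlim by blast
  have "mcarrier (prodz (\<lambda>s. A s t)) \<subseteq> (\<lambda>x. \<lambda>s. mdiff (A s t) (x s) (alpha s t (x (s - 1)))) ` mcarrier (prodz (\<lambda>s. A s t))"
    using tr quot_trivial_iff[OF prodz_is_mod dz_submod[of "\<lambda>s. A s t" "\<lambda>s. alpha s t"]] hal
    unfolding Rlim_int_def by simp
  moreover have "a \<in> mcarrier (prodz (\<lambda>s. A s t))" using a by simp
  ultimately obtain c where "c \<in> mcarrier (prodz (\<lambda>s. A s t))" "a = (\<lambda>s. mdiff (A s t) (c s) (alpha s t (c (s - 1))))"
    by blast
  thus ?thesis by (intro exI[of _ c]) simp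
qed

lemma part3: "trivial_mod (Rlim_int (\<lambda>s. sub (Ainf A alpha t) (Ffilt A alpha s t)) (\<lambda>s. id))"
proof -
  define X where "X = (\<lambda>s. sub (Ainf A alpha t) (Ffilt A alpha s t))"
  have mX: "\<And>s. is_mod (X s)" unfolding X_def by (rule submod_sub_is_mod[OF mAi F_submod])
  have hX: "\<And>s. hom (X (s - 1)) (X s) ((\<lambda>s. id) s)"
  proof -
    fix s show "hom (X (s - 1)) (X s) ((\<lambda>s. id) s)"
      unfolding X_def using hom_id_sub[OF F_mono[of s t], of "Ainf A alpha t"] by simp
  qed
  have "mcarrier (prodz X) \<subseteq> (\<lambda>x. \<lambda>s. mdiff (X s) (x s) (id (x (s - 1)))) ` mcarrier (prodz X)"
  proof
    fix x assume "x \<in> mcarrier (prodz X)"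
    hence "\<forall>s. \<exists>a. a \<in> mcarrier (A s t) \<and> x s = iota A alpha s t a" unfolding X_def F_eq by auto
    then obtain a where a: "\<And>s. a s \<in> mcarrier (A s t)" "\<And>s. x s = iota A alpha s t (a s)" by metis
    obtain c where c: "\<And>s. c s \<in> mcarrier (A s t)" "\<And>s. a s = mdiff (A s t) (c s) (alpha s t (c (s - 1)))"
      using Rlim_A_split[OF a(1)] by metis
    define g where "g s = iota A alpha s t (c s)" for s
    have g: "g \<in> mcarrier (prodz X)" unfolding X_def g_def F_eq using c(1) by simp
    have "x s = mdiff (X s) (g s) (id (g (s - 1)))" for s
    proof -
      have "x s = iota A alpha s t (mdiff (A s t) (c s) (alpha s t (c (s - 1))))" using a(2) c(2) by simp
      also have "\<dots> = mdiff (Ainf A alpha t) (g s) (g (s - 1))"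
        unfolding g_def using io_diff[OF c(1) al_c[OF c(1)]] io_alpha[OF c(1)] by simp
      finally show ?thesis unfolding X_def by simp
    qed
    hence "x = (\<lambda>s. mdiff (X s) (g s) (id (g (s - 1))))" by auto
    thus "x \<in> (\<lambda>x. \<lambda>s. mdiff (X s) (x s) (id (x (s - 1)))) ` mcarrier (prodz X)" using g by blast
  qed
  hence "trivial_mod (quot (prodz X) ((\<lambda>x. \<lambda>s. mdiff (X s) (x s) (id (x (s - 1)))) ` mcarrier (prodz X)))"
    using quot_trivial_iff[OF prodz_is_mod[OF mX] dz_submod[of X "\<lambda>s. id", OF mX hX]] by simp
  thus ?thesis unfolding Rlim_int_def X_def .
qed

lemma Zinf_eq: "Zinf A E alpha gamma dg s (t + db) = beta s t ` mcarrier (A s t)"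
proof
  show "Zinf A E alpha gamma dg s (t + db) \<subseteq> beta s t ` mcarrier (A s t)"
  proof
    fix x assume x: "x \<in> Zinf A E alpha gamma dg s (t + db)"
    have xr: "x \<in> Zr A E alpha gamma dg (Suc r) s (t + db)" for r using x unfolding Zinf_def by auto
    have xE: "x \<in> mcarrier (E s (t + db))" using xr[of 0] unfolding Zr_def by simp
    have gc: "gamma s (t + db) x \<in> mcarrier (A (s - 1) (t + db + dg))" using hom_c[OF mE mA hga xE] .
    have "gamma s (t + db) x \<in> im (t + db + dg) r (s - 1)" for r
      using xr[of r] unfolding Zr_def im_def by simp
    hence "gamma s (t + db) x \<in> imInf (t + db + dg) (s - 1)" unfolding imInf_def using gc by simp
    hence "gamma s (t + db) x = mzero (A (s - 1) (t + db + dg))" by (rule imInf_zero)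
    hence "x \<in> kerm (E s (t + db)) (A (s - 1) (t + db + dg)) (gamma s (t + db))" unfolding kerm_def using xE by simp
    thus "x \<in> beta s t ` mcarrier (A s t)" using ex_bg by simp
  qed
  show "beta s t ` mcarrier (A s t) \<subseteq> Zinf A E alpha gamma dg s (t + db)"
  proof
    fix x assume "x \<in> beta s t ` mcarrier (A s t)"
    hence k: "x \<in> kerm (E s (t + db)) (A (s - 1) (t + db + dg)) (gamma s (t + db))" using ex_bg by simp
    have "x \<in> Zr A E alpha gamma dg (Suc r) s (t + db)" for r
    proof -
      have e0: "apow alpha (t + db + dg) r (s - 1) (mzero (A (s - 1 - int r) (t + db + dg))) = mzero (A (s - 1) (t + db + dg))"
        using hom_zero[OF mA mA apow_hom] by simp
      have z0: "mzero (A (s - 1 - int r) (t + db + dg)) \<in> mcarrier (A (s - 1 - int r) (t + db + dg))" by (rule mz[OF mA])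
      have "mzero (A (s - 1) (t + db + dg)) \<in> apow alpha (t + db + dg) r (s - 1) ` mcarrier (A (s - 1 - int r) (t + db + dg))"
        by (rule image_eqI[where f="apow alpha (t + db + dg) r (s - 1)", OF e0[symmetric] z0])
      thus ?thesis using k unfolding Zr_def kerm_def by simp
    qed
    hence "x \<in> Zr A E alpha gamma dg r s (t + db)" if "r \<ge> 1" for r
    proof -
      have "r = Suc (r - 1)" using that by simp
      thus ?thesis using \<open>\<And>r. x \<in> Zr A E alpha gamma dg (Suc r) s (t + db)\<close>[of "r - 1"] by simp
    qed
    thus "x \<in> Zinf A E alpha gamma dg s (t + db)" unfolding Zinf_def by auto
  qed
qed

lemma ker_iota_iff: assumes y: "y \<in> mcarrier (A s t)"
  shows "(\<exists>r\<ge>1. apow alpha t (r - 1) (s + int r - 1) y = mzero (A (s + int r - 1) t)) \<longleftrightarrow>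
    iota A alpha s t y = mzero (Ainf A alpha t)"
proof -
  have "(\<exists>r\<ge>1. apow alpha t (r - 1) (s + int r - 1) y = mzero (A (s + int r - 1) t)) \<longleftrightarrow>
     (\<exists>u \<ge> s. T (\<lambda>s. alpha s t) u s y = mzero (A u t))"
  proof
    assume "\<exists>r\<ge>1. apow alpha t (r - 1) (s + int r - 1) y = mzero (A (s + int r - 1) t)"
    then obtain r where r: "r \<ge> 1" "apow alpha t (r - 1) (s + int r - 1) y = mzero (A (s + int r - 1) t)" by blast
    have "nat (s + int r - 1 - s) = r - 1" using r by simp
    hence "T (\<lambda>s. alpha s t) (s + int r - 1) s y = mzero (A (s + int r - 1) t)" unfolding T_def using r by simp
    moreover have "s + int r - 1 \<ge> s" using r by simp
    ultimately show "\<exists>u \<ge> s. T (\<lambda>s. alpha s t) u s y = mzero (A u t)" by blast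
  next
    assume "\<exists>u \<ge> s. T (\<lambda>s. alpha s t) u s y = mzero (A u t)"
    then obtain u where u: "u \<ge> s" "T (\<lambda>s. alpha s t) u s y = mzero (A u t)" by blast
    define r where "r = Suc (nat (u - s))"
    have e: "s + int r - 1 = u" "r - 1 = nat (u - s)" unfolding r_def using u by auto
    have "apow alpha t (r - 1) (s + int r - 1) y = mzero (A (s + int r - 1) t)"
      unfolding e using u unfolding T_def by simp
    moreover have "r \<ge> 1" unfolding r_def by simp
    ultimately show "\<exists>r\<ge>1. apow alpha t (r - 1) (s + int r - 1) y = mzero (A (s + int r - 1) t)" by blast
  qed
  also have "\<dots> \<longleftrightarrow> iota A alpha s t y = mzero (Ainf A alpha t)" using io_zero_iff[OF y] by simp
  finally show ?thesis .
qed

lemma Binf_eq: "Binf A alpha beta db s (t + db) = beta s t ` kerm (A s t) (Ainf A alpha t) (iota A alpha s t)"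
proof -
  have "Binf A alpha beta db s (t + db) = (\<Union>r\<in>{1..}. beta s t ` {y \<in> mcarrier (A s t).
        apow alpha t (r - 1) (s + int r - 1) y = mzero (A (s + int r - 1) t)})"
    unfolding Binf_def Br_def by simp
  also have "\<dots> = beta s t ` (\<Union>r\<in>{1..}. {y \<in> mcarrier (A s t).
        apow alpha t (r - 1) (s + int r - 1) y = mzero (A (s + int r - 1) t)})"
    by (simp add: image_UN)
  also have "(\<Union>r\<in>{1..}. {y \<in> mcarrier (A s t).
        apow alpha t (r - 1) (s + int r - 1) y = mzero (A (s + int r - 1) t)}) = kerm (A s t) (Ainf A alpha t) (iota A alpha s t)"
  proof
    show "(\<Union>r\<in>{1..}. {y \<in> mcarrier (A s t).
        apow alpha t (r - 1) (s + int r - 1) y = mzero (A (s + int r - 1) t)}) \<subseteq> kerm (A s t) (Ainf A alpha t) (iota A alpha s t)"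
    proof
      fix y assume "y \<in> (\<Union>r\<in>{1..}. {y \<in> mcarrier (A s t).
        apow alpha t (r - 1) (s + int r - 1) y = mzero (A (s + int r - 1) t)})"
      then obtain r where "r \<ge> 1" "y \<in> mcarrier (A s t)" "apow alpha t (r - 1) (s + int r - 1) y = mzero (A (s + int r - 1) t)"
        by auto
      thus "y \<in> kerm (A s t) (Ainf A alpha t) (iota A alpha s t)" unfolding kerm_def using ker_iota_iff by blast
    qed
    show "kerm (A s t) (Ainf A alpha t) (iota A alpha s t) \<subseteq> (\<Union>r\<in>{1..}. {y \<in> mcarrier (A s t).
        apow alpha t (r - 1) (s + int r - 1) y = mzero (A (s + int r - 1) t)})"
    proof
      fix y assume "y \<in> kerm (A s t) (Ainf A alpha t) (iota A alpha s t)"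
      hence y: "y \<in> mcarrier (A s t)" "iota A alpha s t y = mzero (Ainf A alpha t)" unfolding kerm_def by auto
      then obtain r where "r \<ge> 1" "apow alpha t (r - 1) (s + int r - 1) y = mzero (A (s + int r - 1) t)"
        using ker_iota_iff[OF y(1)] by blast
      thus "y \<in> (\<Union>r\<in>{1..}. {y \<in> mcarrier (A s t).
        apow alpha t (r - 1) (s + int r - 1) y = mzero (A (s + int r - 1) t)})" using y by auto
    qed
  qed
  finally show ?thesis .
qed

lemma Fm1_eq: "Ffilt A alpha (s - 1) t = iota A alpha s t ` kerm (A s t) (E s (t + db)) (beta s t)"
proof -
  have "Ffilt A alpha (s - 1) t = iota A alpha s t ` alpha s t ` mcarrier (A (s - 1) t)"
    unfolding F_eq image_image using io_alpha by simp
  thus ?thesis using ex_ab by simp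
qed

lemma part2: "iso (Einf A E alpha beta gamma db dg s (t + db))
                   (quot (sub (Ainf A alpha t) (Ffilt A alpha s t)) (Ffilt A alpha (s - 1) t))"
  unfolding Einf_def Zinf_eq Binf_eq Fm1_eq F_eq[of s t] using iso_quot_lemma[OF mA mE mAi hbe io_hom] .

definition Ks where "Ks t s = (\<lambda>r. sub (A s t) (Kim A alpha s r t))"
definition PP where "PP t s = prodn (Ks t s)"
definition DD where "DD t s = dn (Ks t s) (\<lambda>r. id)"
definition trm where "trm t s = Rlim_nat_map (Ks t s) (\<lambda>r. id) (\<lambda>x r. alpha s t (x r))"

lemma Kim_eq: "Kim A alpha s r t = kerm (A s t) (Ainf A alpha t) (iota A alpha s t) \<inter> im t r s"
  unfolding Kim_def im_def ..

lemma K_submod: "submod (A s t) (Kim A alpha s r t)"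
  unfolding Kim_eq by (rule submod_Int[OF hom_ker_submod[OF mA mAi io_hom] im_submod])

lemma K_mono: "Kim A alpha s (Suc r) t \<subseteq> Kim A alpha s r t"
  unfolding Kim_eq using im_mono by auto

lemma K_c: "x \<in> Kim A alpha s r t \<Longrightarrow> x \<in> mcarrier (A s t)"
  using submod_carrier[OF K_submod] .

lemma mKs: "is_mod (Ks t s r)" unfolding Ks_def by (rule submod_sub_is_mod[OF mA K_submod])
lemma hKs: "hom (Ks t s (Suc r)) (Ks t s r) ((\<lambda>r. id) r)" unfolding Ks_def using hom_id_sub[OF K_mono[of s r t], of "A s t"] by simp
lemma mPP: "is_mod (PP t s)" unfolding PP_def by (rule prodn_is_mod[OF mKs])
lemma sDD: "submod (PP t s) (DD t s)" unfolding PP_def DD_def by (rule dn_submod[of "Ks t s" "\<lambda>r. id", OF mKs hKs])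

lemma PP_carrier: "mcarrier (PP t s) = {x. \<forall>r. x r \<in> Kim A alpha s r t}"
  unfolding PP_def Ks_def by simp
lemma PP_ops: "madd (PP t s) x y = (\<lambda>r. madd (A s t) (x r) (y r))"
  "msmult (PP t s) c x = (\<lambda>r. msmult (A s t) c (x r))"
  "mdiff (PP t s) x y = (\<lambda>r. mdiff (A s t) (x r) (y r))"
  "mzero (PP t s) = (\<lambda>r. mzero (A s t))"
  unfolding PP_def Ks_def by (simp_all add: prodn_mdiff)

lemma DD_eq: "DD t s = (\<lambda>c r. mdiff (A s t) (c r) (c (Suc r))) ` mcarrier (PP t s)"
  unfolding DD_def dn_def PP_def Ks_def by simp

lemma Wtower_eq: "Wtower A alpha s t = quot (PP t s) (DD t s)"
  unfolding Wtower_def Rlim_nat_def PP_def DD_def Ks_def ..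

lemma Wobj_eq: "Wobj A alpha t = colim (\<lambda>s. quot (PP t s) (DD t s)) (trm t)"
  unfolding Wobj_def Wtower_eq trm_def Ks_def ..

lemma mW: "is_mod (quot (PP t s) (DD t s))" by (rule quot_is_mod[OF mPP sDD])

lemma K_alpha: "x \<in> Kim A alpha (s - 1) r t \<Longrightarrow> alpha s t x \<in> Kim A alpha s r t"
  unfolding Kim_eq kerm_def using im_alpha io_alpha by auto

lemma trm_coset: assumes k: "k \<in> mcarrier (PP t (s - 1))"
  shows "trm t s (coset (PP t (s - 1)) (DD t (s - 1)) k) = coset (PP t s) (DD t s) (\<lambda>r. alpha s t (k r))"
proof -
  let ?k' = "rep (coset (PP t (s - 1)) (DD t (s - 1)) k)"
  have k': "?k' \<in> mcarrier (PP t (s - 1))" "mdiff (PP t (s - 1)) ?k' k \<in> DD t (s - 1)"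
    using rep_coset[OF mPP sDD k] by auto
  then obtain c where c: "c \<in> mcarrier (PP t (s - 1))" "mdiff (PP t (s - 1)) ?k' k = (\<lambda>r. mdiff (A (s - 1) t) (c r) (c (Suc r)))"
    unfolding DD_eq by blast
  have kc: "\<And>r. k r \<in> mcarrier (A (s - 1) t)" "\<And>r. ?k' r \<in> mcarrier (A (s - 1) t)" "\<And>r. c r \<in> mcarrier (A (s - 1) t)"
    using k k'(1) c(1) unfolding PP_carrier using K_c by blast+
  have ac: "(\<lambda>r. alpha s t (c r)) \<in> mcarrier (PP t s)" using c(1) K_alpha unfolding PP_carrier by simp
  have akc: "(\<lambda>r. alpha s t (k r)) \<in> mcarrier (PP t s)" "(\<lambda>r. alpha s t (?k' r)) \<in> mcarrier (PP t s)"
    using k k'(1) K_alpha unfolding PP_carrier by simp_all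
  have "mdiff (PP t s) (\<lambda>r. alpha s t (?k' r)) (\<lambda>r. alpha s t (k r)) =
        (\<lambda>r. mdiff (A s t) (alpha s t (c r)) (alpha s t (c (Suc r))))"
  proof
    fix r
    have "mdiff (A (s - 1) t) (?k' r) (k r) = mdiff (A (s - 1) t) (c r) (c (Suc r))"
      using fun_cong[OF c(2), of r] unfolding PP_ops by simp
    hence "alpha s t (mdiff (A (s - 1) t) (?k' r) (k r)) = alpha s t (mdiff (A (s - 1) t) (c r) (c (Suc r)))" by simp
    thus "mdiff (PP t s) (\<lambda>r. alpha s t (?k' r)) (\<lambda>r. alpha s t (k r)) r =
        mdiff (A s t) (alpha s t (c r)) (alpha s t (c (Suc r)))"
      unfolding PP_ops using hom_diff[OF mA mA hal kc(2) kc(1)] hom_diff[OF mA mA hal kc(3) kc(3)] by simp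
  qed
  also have "\<dots> \<in> DD t s" unfolding DD_eq using ac by (rule image_eqI[rotated]) simp
  finally have "coset (PP t s) (DD t s) (\<lambda>r. alpha s t (?k' r)) = coset (PP t s) (DD t s) (\<lambda>r. alpha s t (k r))"
    using coset_eq_iff[OF mPP sDD akc(2) akc(1)] by simp
  thus ?thesis unfolding trm_def Rlim_nat_map_def PP_def[symmetric] DD_def[symmetric] .
qed

lemma trm_hom: "hom (quot (PP t (s - 1)) (DD t (s - 1))) (quot (PP t s) (DD t s)) (trm t s)"
  unfolding hom_def
proof (intro conjI ballI allI)
  have car: "\<And>X. X \<in> mcarrier (quot (PP t (s - 1)) (DD t (s - 1))) \<Longrightarrow>
    \<exists>k. k \<in> mcarrier (PP t (s - 1)) \<and> X = coset (PP t (s - 1)) (DD t (s - 1)) k"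
    using quot_carrier[OF mPP sDD] by auto
  have ak: "\<And>k. k \<in> mcarrier (PP t (s - 1)) \<Longrightarrow> (\<lambda>r. alpha s t (k r)) \<in> mcarrier (PP t s)"
    using K_alpha unfolding PP_carrier by simp
  have inq: "\<And>k. k \<in> mcarrier (PP t s) \<Longrightarrow> coset (PP t s) (DD t s) k \<in> mcarrier (quot (PP t s) (DD t s))"
    using quot_carrier[OF mPP sDD] by auto
  have kc: "\<And>k r. k \<in> mcarrier (PP t (s - 1)) \<Longrightarrow> k r \<in> mcarrier (A (s - 1) t)"
    unfolding PP_carrier using K_c by blast
  {
    fix X assume "X \<in> mcarrier (quot (PP t (s - 1)) (DD t (s - 1)))"
    then obtain k where k: "k \<in> mcarrier (PP t (s - 1))" "X = coset (PP t (s - 1)) (DD t (s - 1)) k" using car by blast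
    show "trm t s X \<in> mcarrier (quot (PP t s) (DD t s))" using trm_coset[OF k(1)] k ak inq by simp
  next
    fix X Y assume "X \<in> mcarrier (quot (PP t (s - 1)) (DD t (s - 1)))" "Y \<in> mcarrier (quot (PP t (s - 1)) (DD t (s - 1)))"
    then obtain k l where k: "k \<in> mcarrier (PP t (s - 1))" "X = coset (PP t (s - 1)) (DD t (s - 1)) k"
      and l: "l \<in> mcarrier (PP t (s - 1))" "Y = coset (PP t (s - 1)) (DD t (s - 1)) l" using car by metis
    have kl: "madd (PP t (s - 1)) k l \<in> mcarrier (PP t (s - 1))" using ma[OF mPP k(1) l(1)] .
    have "trm t s (madd (quot (PP t (s - 1)) (DD t (s - 1))) X Y) = coset (PP t s) (DD t s) (\<lambda>r. alpha s t (madd (A (s - 1) t) (k r) (l r)))"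
      using quot_add[OF mPP sDD k(1) l(1)] trm_coset[OF kl] k l unfolding PP_ops by simp
    also have "(\<lambda>r. alpha s t (madd (A (s - 1) t) (k r) (l r))) = madd (PP t s) (\<lambda>r. alpha s t (k r)) (\<lambda>r. alpha s t (l r))"
      unfolding PP_ops using hom_add[OF mA mA hal kc[OF k(1)] kc[OF l(1)]] by simp
    also have "coset (PP t s) (DD t s) \<dots> = madd (quot (PP t s) (DD t s)) (trm t s X) (trm t s Y)"
      using quot_add[OF mPP sDD ak[OF k(1)] ak[OF l(1)]] trm_coset[OF k(1)] trm_coset[OF l(1)] k l by simp
    finally show "trm t s (madd (quot (PP t (s - 1)) (DD t (s - 1))) X Y) = madd (quot (PP t s) (DD t s)) (trm t s X) (trm t s Y)" .
  next
    fix r X assume "X \<in> mcarrier (quot (PP t (s - 1)) (DD t (s - 1)))"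
    then obtain k where k: "k \<in> mcarrier (PP t (s - 1))" "X = coset (PP t (s - 1)) (DD t (s - 1)) k" using car by blast
    have kr: "msmult (PP t (s - 1)) r k \<in> mcarrier (PP t (s - 1))" using ms[OF mPP k(1)] .
    have "trm t s (msmult (quot (PP t (s - 1)) (DD t (s - 1))) r X) = coset (PP t s) (DD t s) (\<lambda>n. alpha s t (msmult (A (s - 1) t) r (k n)))"
      using quot_sm[OF mPP sDD k(1)] trm_coset[OF kr] k unfolding PP_ops by simp
    also have "(\<lambda>n. alpha s t (msmult (A (s - 1) t) r (k n))) = msmult (PP t s) r (\<lambda>n. alpha s t (k n))"
      unfolding PP_ops using hom_sm[OF mA mA hal kc[OF k(1)]] by simp
    also have "coset (PP t s) (DD t s) \<dots> = msmult (quot (PP t s) (DD t s)) r (trm t s X)"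
      using quot_sm[OF mPP sDD ak[OF k(1)]] trm_coset[OF k(1)] k by simp
    finally show "trm t s (msmult (quot (PP t (s - 1)) (DD t (s - 1))) r X) = msmult (quot (PP t s) (DD t s)) r (trm t s X)" .
  }
qed

definition VL where "VL t s x0 m \<longleftrightarrow> (\<forall>r. m r \<in> im t r s \<and> iota A alpha s t (m r) = x0)"
definition diffs where "diffs t s m = (\<lambda>r. mdiff (A s t) (m r) (m (Suc r)))"
definition Finf where "Finf t = {x0. \<forall>s. x0 \<in> Ffilt A alpha s t}"
definition lift where "lift t s x0 = (\<lambda>r. SOME m. m \<in> im t r s \<and> iota A alpha s t m = x0)"
definition del where "del t s x0 = coset (PP t s) (DD t s) (diffs t s (lift t s x0))"

lemma Finf_c: "x0 \<in> Finf t \<Longrightarrow> x0 \<in> mcarrier (Ainf A alpha t)"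
  unfolding Finf_def using submod_carrier[OF F_submod] by blast

lemma VL_lift: assumes x0: "x0 \<in> Finf t" shows "VL t s x0 (lift t s x0)"
  unfolding VL_def
proof
  fix r
  have "x0 \<in> Ffilt A alpha (s - int r) t" using x0 unfolding Finf_def by blast
  then obtain u where u: "u \<in> mcarrier (A (s - int r) t)" "x0 = iota A alpha (s - int r) t u" unfolding F_eq by blast
  have "apow alpha t r s u \<in> im t r s \<and> iota A alpha s t (apow alpha t r s u) = x0"
    unfolding im_def using u io_apow by simp
  hence "\<exists>m. m \<in> im t r s \<and> iota A alpha s t m = x0" by blast
  thus "lift t s x0 r \<in> im t r s \<and> iota A alpha s t (lift t s x0 r) = x0"
    unfolding lift_def by (rule someI_ex)
qed

lemma VL_c: "VL t s x0 m \<Longrightarrow> m r \<in> mcarrier (A s t)"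
  unfolding VL_def using im_c by blast

lemma diffs_PP: assumes v: "VL t s x0 m" and x0: "x0 \<in> mcarrier (Ainf A alpha t)"
  shows "diffs t s m \<in> mcarrier (PP t s)"
  unfolding PP_carrier
proof (intro CollectI allI)
  fix r
  have mc: "m r \<in> mcarrier (A s t)" "m (Suc r) \<in> mcarrier (A s t)" using VL_c[OF v] by auto
  have "iota A alpha s t (mdiff (A s t) (m r) (m (Suc r))) = mzero (Ainf A alpha t)"
    using io_diff[OF mc] v x0 unfolding VL_def by simp
  moreover have "mdiff (A s t) (m r) (m (Suc r)) \<in> im t r s"
    using v unfolding VL_def using submod_diff[OF im_submod] im_mono by blast
  ultimately show "diffs t s m r \<in> Kim A alpha s r t"
    unfolding diffs_def Kim_eq kerm_def using mc by simp
qed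

lemma VL_indep: assumes v: "VL t s x0 m" and v': "VL t s x0 m'" and x0: "x0 \<in> mcarrier (Ainf A alpha t)"
  shows "coset (PP t s) (DD t s) (diffs t s m) = coset (PP t s) (DD t s) (diffs t s m')"
proof -
  define c where "c r = mdiff (A s t) (m r) (m' r)" for r
  have mc: "\<And>r. m r \<in> mcarrier (A s t)" "\<And>r. m' r \<in> mcarrier (A s t)" using VL_c v v' by auto
  have cK: "c r \<in> Kim A alpha s r t" for r
  proof -
    have "iota A alpha s t (c r) = mzero (Ainf A alpha t)"
      unfolding c_def using io_diff[OF mc(1) mc(2)] v v' x0 unfolding VL_def by simp
    moreover have "c r \<in> im t r s" unfolding c_def using v v' unfolding VL_def using submod_diff[OF im_submod] by blast
    ultimately show ?thesis unfolding Kim_eq kerm_def c_def using mc by simp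
  qed
  have cP: "c \<in> mcarrier (PP t s)" unfolding PP_carrier using cK by simp
  have "mdiff (PP t s) (diffs t s m) (diffs t s m') = (\<lambda>r. mdiff (A s t) (c r) (c (Suc r)))"
    unfolding PP_ops diffs_def c_def using diff_diff_distrib[OF mA mc(1) mc(1) mc(2) mc(2)] by simp
  also have "\<dots> \<in> DD t s" unfolding DD_eq using cP by (rule image_eqI[rotated]) simp
  finally show ?thesis using coset_eq_iff[OF mPP sDD diffs_PP[OF v x0] diffs_PP[OF v' x0]] by simp
qed

lemma del_eq: "x0 \<in> Finf t \<Longrightarrow> VL t s x0 m \<Longrightarrow> del t s x0 = coset (PP t s) (DD t s) (diffs t s m)"
  unfolding del_def using VL_indep VL_lift Finf_c by blast

lemma VL_alpha: assumes v: "VL t (s - 1) x0 m" shows "VL t s x0 (\<lambda>r. alpha s t (m r))"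
  unfolding VL_def
proof
  fix r
  have "m r \<in> im t r (s - 1)" "iota A alpha (s - 1) t (m r) = x0" using v unfolding VL_def by auto
  thus "alpha s t (m r) \<in> im t r s \<and> iota A alpha s t (alpha s t (m r)) = x0"
    using im_alpha io_alpha[OF im_c] by simp
qed

lemma del_c: "x0 \<in> Finf t \<Longrightarrow> del t s x0 \<in> mcarrier (quot (PP t s) (DD t s))"
  unfolding del_def quot_carrier[OF mPP sDD] using diffs_PP[OF VL_lift Finf_c] by blast

lemma trm_del: assumes x0: "x0 \<in> Finf t" shows "trm t s (del t (s - 1) x0) = del t s x0"
proof -
  let ?m = "lift t (s - 1) x0"
  have v: "VL t (s - 1) x0 ?m" by (rule VL_lift[OF x0])
  have "trm t s (del t (s - 1) x0) = coset (PP t s) (DD t s) (\<lambda>r. alpha s t (diffs t (s - 1) ?m r))"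
    unfolding del_def using trm_coset[OF diffs_PP[OF v Finf_c[OF x0]]] .
  also have "(\<lambda>r. alpha s t (diffs t (s - 1) ?m r)) = diffs t s (\<lambda>r. alpha s t (?m r))"
    unfolding diffs_def using hom_diff[OF mA mA hal VL_c[OF v] VL_c[OF v]] by simp
  also have "coset (PP t s) (DD t s) \<dots> = del t s x0" using del_eq[OF x0 VL_alpha[OF v]] by simp
  finally show ?thesis .
qed

lemma mWs: "is_mod ((\<lambda>s. quot (PP t s) (DD t s)) s)" using mW by simp
lemma hWs: "hom ((\<lambda>s. quot (PP t s) (DD t s)) (s - 1)) ((\<lambda>s. quot (PP t s) (DD t s)) s) (trm t s)"
  using trm_hom by simp

lemma Tw_del: assumes x0: "x0 \<in> Finf t" shows "T (trm t) (s + int k) s (del t s x0) = del t (s + int k) x0"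
proof (induction k)
  case 0 thus ?case by simp
next
  case (Suc k)
  have "T (trm t) (s + int k + 1) s (del t s x0) = trm t (s + int k + 1) (T (trm t) (s + int k) s (del t s x0))"
    by (rule T_step) simp
  also have "\<dots> = trm t (s + int k + 1) (del t (s + int k + 1 - 1) x0)" using Suc by simp
  also have "\<dots> = del t (s + int k + 1) x0" by (rule trm_del[OF x0])
  finally show ?case by (simp add: ac_simps)
qed

lemma Tw_del': assumes x0: "x0 \<in> Finf t" and "s \<le> u" shows "T (trm t) u s (del t s x0) = del t u x0"
proof -
  have "u = s + int (nat (u - s))" using assms by simp
  thus ?thesis using Tw_del[OF x0, of s "nat (u - s)"] by metis
qed

abbreviation cW where "cW t \<equiv> ccls (\<lambda>s. quot (PP t s) (DD t s)) (trm t)"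

lemma cW_del: assumes x0: "x0 \<in> Finf t" shows "cW t s (del t s x0) = cW t 0 (del t 0 x0)"
proof -
  define v where "v = max 0 s"
  have "cW t s (del t s x0) = cW t v (T (trm t) v s (del t s x0))"
    using ccls_T[of "\<lambda>s. quot (PP t s) (DD t s)" "trm t" s v, OF mWs hWs] del_c[OF x0] unfolding v_def by simp
  also have "\<dots> = cW t v (del t v x0)" using Tw_del'[OF x0] unfolding v_def by simp
  also have "\<dots> = cW t v (T (trm t) v 0 (del t 0 x0))" using Tw_del'[OF x0] unfolding v_def by simp
  also have "\<dots> = cW t 0 (del t 0 x0)"
    using ccls_T[of "\<lambda>s. quot (PP t s) (DD t s)" "trm t" 0 v, OF mWs hWs] del_c[OF x0] unfolding v_def by simp
  finally show ?thesis .
qed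

abbreviation LL where "LL t \<equiv> lim_int (\<lambda>s. sub (Ainf A alpha t) (Ffilt A alpha s t)) (\<lambda>s. id)"

lemma LL_carrier: "x \<in> mcarrier (LL t) \<longleftrightarrow> (\<forall>s. x s \<in> Ffilt A alpha s t) \<and> (\<forall>s. x (s - 1) = x s)"
  unfolding lim_int_def by simp
lemma LL_ops: "madd (LL t) x y = (\<lambda>s. madd (Ainf A alpha t) (x s) (y s))"
  "msmult (LL t) r x = (\<lambda>s. msmult (Ainf A alpha t) r (x s))"
  unfolding lim_int_def by simp_all

lemma const_seq: assumes "\<forall>s. x (s - 1) = x (s::int)" shows "x s = x 0"
proof -
  have p: "x (int n) = x 0" for n
  proof (induction n)
    case (Suc n) thus ?case using assms[rule_format, of "int (Suc n)"] by simp
  qed simp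
  have q: "x (- int n) = x 0" for n
  proof (induction n)
    case (Suc n)
    have e: "- int (Suc n) = - int n - 1" by simp
    show ?case unfolding e using assms[rule_format, of "- int n"] Suc by simp
  qed simp
  show ?thesis
  proof (cases "s \<ge> 0")
    case True thus ?thesis using p[of "nat s"] by simp
  next
    case False thus ?thesis using q[of "nat (- s)"] by simp
  qed
qed

lemma LL_const: assumes "x \<in> mcarrier (LL t)" shows "x s = x 0" "x 0 \<in> Finf t"
proof -
  have a: "\<forall>s. x s \<in> Ffilt A alpha s t" "\<forall>s. x (s - 1) = x s" using assms unfolding LL_carrier by auto
  show c: "x s = x 0" for s by (rule const_seq[OF a(2)])
  show "x 0 \<in> Finf t" unfolding Finf_def
  proof (intro CollectI allI)
    fix s show "x 0 \<in> Ffilt A alpha s t" using a(1) c[of s] by metis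
  qed
qed

definition phi where "phi t x = cW t 0 (del t 0 (x 0))"

lemma Wobj_carrier: "mcarrier (Wobj A alpha t) = {cW t s X | s X. X \<in> mcarrier (quot (PP t s) (DD t s))}"
  unfolding Wobj_eq using colim_carrier[of "\<lambda>s. quot (PP t s) (DD t s)" "trm t", OF mWs hWs] by simp

lemma W_add: "X \<in> mcarrier (quot (PP t v) (DD t v)) \<Longrightarrow> Y \<in> mcarrier (quot (PP t v) (DD t v)) \<Longrightarrow>
  madd (Wobj A alpha t) (cW t v X) (cW t v Y) = cW t v (madd (quot (PP t v) (DD t v)) X Y)"
  unfolding Wobj_eq using colim_add_same[of "\<lambda>s. quot (PP t s) (DD t s)" "trm t", OF mWs hWs] by simp
lemma W_sm: "X \<in> mcarrier (quot (PP t v) (DD t v)) \<Longrightarrow>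
  msmult (Wobj A alpha t) r (cW t v X) = cW t v (msmult (quot (PP t v) (DD t v)) r X)"
  unfolding Wobj_eq using colim_sm[of "\<lambda>s. quot (PP t s) (DD t s)" "trm t", OF mWs hWs] by simp

lemma Finf_add: "x0 \<in> Finf t \<Longrightarrow> y0 \<in> Finf t \<Longrightarrow> madd (Ainf A alpha t) x0 y0 \<in> Finf t"
  unfolding Finf_def using submod_add[OF F_submod] by blast
lemma Finf_sm: "x0 \<in> Finf t \<Longrightarrow> msmult (Ainf A alpha t) r x0 \<in> Finf t"
  unfolding Finf_def using submod_sm[OF F_submod] by blast

lemma del_add: assumes x0: "x0 \<in> Finf t" and y0: "y0 \<in> Finf t"
  shows "del t s (madd (Ainf A alpha t) x0 y0) = madd (quot (PP t s) (DD t s)) (del t s x0) (del t s y0)"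
proof -
  let ?lx = "lift t s x0" and ?ly = "lift t s y0"
  have vx: "VL t s x0 ?lx" and vy: "VL t s y0 ?ly" using VL_lift x0 y0 by auto
  have v: "VL t s (madd (Ainf A alpha t) x0 y0) (\<lambda>r. madd (A s t) (?lx r) (?ly r))"
    unfolding VL_def
  proof
    fix r
    have "?lx r \<in> im t r s" "?ly r \<in> im t r s" "iota A alpha s t (?lx r) = x0" "iota A alpha s t (?ly r) = y0"
      using vx vy unfolding VL_def by auto
    thus "madd (A s t) (?lx r) (?ly r) \<in> im t r s \<and> iota A alpha s t (madd (A s t) (?lx r) (?ly r)) = madd (Ainf A alpha t) x0 y0"
      using submod_add[OF im_submod] io_add[OF im_c im_c] by simp
  qed
  have "diffs t s (\<lambda>r. madd (A s t) (?lx r) (?ly r)) = madd (PP t s) (diffs t s ?lx) (diffs t s ?ly)"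
    unfolding diffs_def PP_ops using diff_add_distrib[OF mA VL_c[OF vx] VL_c[OF vy] VL_c[OF vx] VL_c[OF vy]] by simp
  hence "del t s (madd (Ainf A alpha t) x0 y0) = coset (PP t s) (DD t s) (madd (PP t s) (diffs t s ?lx) (diffs t s ?ly))"
    using del_eq[OF Finf_add[OF x0 y0] v] by simp
  also have "\<dots> = madd (quot (PP t s) (DD t s)) (del t s x0) (del t s y0)"
    unfolding del_def using quot_add[OF mPP sDD diffs_PP[OF vx Finf_c[OF x0]] diffs_PP[OF vy Finf_c[OF y0]]] by simp
  finally show ?thesis .
qed

lemma del_sm: assumes x0: "x0 \<in> Finf t"
  shows "del t s (msmult (Ainf A alpha t) c x0) = msmult (quot (PP t s) (DD t s)) c (del t s x0)"
proof -
  let ?lx = "lift t s x0"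
  have vx: "VL t s x0 ?lx" using VL_lift x0 by auto
  have v: "VL t s (msmult (Ainf A alpha t) c x0) (\<lambda>r. msmult (A s t) c (?lx r))"
    unfolding VL_def
  proof
    fix r
    have "?lx r \<in> im t r s" "iota A alpha s t (?lx r) = x0" using vx unfolding VL_def by auto
    thus "msmult (A s t) c (?lx r) \<in> im t r s \<and> iota A alpha s t (msmult (A s t) c (?lx r)) = msmult (Ainf A alpha t) c x0"
      using submod_sm[OF im_submod] io_sm[OF im_c] by simp
  qed
  have "diffs t s (\<lambda>r. msmult (A s t) c (?lx r)) = msmult (PP t s) c (diffs t s ?lx)"
    unfolding diffs_def PP_ops using diff_sm_distrib[OF mA VL_c[OF vx] VL_c[OF vx]] by simp
  hence "del t s (msmult (Ainf A alpha t) c x0) = coset (PP t s) (DD t s) (msmult (PP t s) c (diffs t s ?lx))"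
    using del_eq[OF Finf_sm[OF x0] v] by simp
  also have "\<dots> = msmult (quot (PP t s) (DD t s)) c (del t s x0)"
    unfolding del_def using quot_sm[OF mPP sDD diffs_PP[OF vx Finf_c[OF x0]]] by simp
  finally show ?thesis .
qed

lemma phi_hom: "hom (LL t) (Wobj A alpha t) (phi t)"
  unfolding hom_def
proof (intro conjI ballI allI)
  fix x assume x: "x \<in> mcarrier (LL t)"
  show "phi t x \<in> mcarrier (Wobj A alpha t)" unfolding phi_def Wobj_carrier using del_c[OF LL_const(2)[OF x]] by blast
next
  fix x y assume x: "x \<in> mcarrier (LL t)" and y: "y \<in> mcarrier (LL t)"
  show "phi t (madd (LL t) x y) = madd (Wobj A alpha t) (phi t x) (phi t y)"
    unfolding phi_def LL_ops using del_add[OF LL_const(2)[OF x] LL_const(2)[OF y]]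
      W_add[OF del_c[OF LL_const(2)[OF x]] del_c[OF LL_const(2)[OF y]]] by simp
next
  fix r x assume x: "x \<in> mcarrier (LL t)"
  show "phi t (msmult (LL t) r x) = msmult (Wobj A alpha t) r (phi t x)"
    unfolding phi_def LL_ops using del_sm[OF LL_const(2)[OF x]] W_sm[OF del_c[OF LL_const(2)[OF x]]] by simp
qed

lemma del_inj: assumes x0: "x0 \<in> Finf t" and y0: "y0 \<in> Finf t" and e: "del t u x0 = del t u y0"
  shows "x0 = y0"
proof -
  let ?lx = "lift t u x0" and ?ly = "lift t u y0"
  have vx: "VL t u x0 ?lx" and vy: "VL t u y0 ?ly" using VL_lift x0 y0 by auto
  have lc: "\<And>r. ?lx r \<in> mcarrier (A u t)" "\<And>r. ?ly r \<in> mcarrier (A u t)" using VL_c vx vy by auto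
  have "mdiff (PP t u) (diffs t u ?lx) (diffs t u ?ly) \<in> DD t u"
    using e coset_eq_iff[OF mPP sDD diffs_PP[OF vx Finf_c[OF x0]] diffs_PP[OF vy Finf_c[OF y0]]] unfolding del_def by simp
  then obtain c where c: "c \<in> mcarrier (PP t u)"
    "mdiff (PP t u) (diffs t u ?lx) (diffs t u ?ly) = (\<lambda>r. mdiff (A u t) (c r) (c (Suc r)))"
    unfolding DD_eq by blast
  have cK: "\<And>r. c r \<in> Kim A alpha u r t" using c(1) unfolding PP_carrier by simp
  have cc: "\<And>r. c r \<in> mcarrier (A u t)" by (rule K_c[OF cK])
  define n where "n r = mdiff (A u t) (mdiff (A u t) (?lx r) (?ly r)) (c r)" for r
  have nc: "n r \<in> mcarrier (A u t)" for r unfolding n_def using lc cc by simp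
  have nstep: "n (Suc r) = n r" for r
  proof -
    have e1: "mdiff (A u t) (diffs t u ?lx r) (diffs t u ?ly r) = mdiff (A u t) (c r) (c (Suc r))"
      using fun_cong[OF c(2), of r] unfolding PP_ops by simp
    have "mdiff (A u t) (n r) (n (Suc r)) = mdiff (A u t)
        (mdiff (A u t) (mdiff (A u t) (?lx r) (?ly r)) (mdiff (A u t) (?lx (Suc r)) (?ly (Suc r))))
        (mdiff (A u t) (c r) (c (Suc r)))"
      unfolding n_def using diff_diff_distrib[OF mA md[OF mA lc(1) lc(2)] cc md[OF mA lc(1) lc(2)] cc] by simp
    also have "mdiff (A u t) (mdiff (A u t) (?lx r) (?ly r)) (mdiff (A u t) (?lx (Suc r)) (?ly (Suc r))) =
        mdiff (A u t) (diffs t u ?lx r) (diffs t u ?ly r)"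
      unfolding diffs_def using diff_diff_distrib[OF mA lc(1) lc(2) lc(1) lc(2)] by simp
    also have "\<dots> = mdiff (A u t) (c r) (c (Suc r))" by (rule e1)
    finally have "mdiff (A u t) (n r) (n (Suc r)) = mzero (A u t)" using cc by simp
    thus ?thesis using diff_zero_iff[OF mA nc nc] by simp
  qed
  have nconst: "n r = n 0" for r by (induction r) (simp_all add: nstep)
  have "n 0 \<in> imInf t u" unfolding imInf_def
  proof (intro CollectI conjI allI)
    show "n 0 \<in> mcarrier (A u t)" by (rule nc)
    fix r
    have i: "?lx r \<in> im t r u" "?ly r \<in> im t r u" "c r \<in> im t r u" using vx vy cK unfolding VL_def Kim_eq by auto
    have "n r \<in> im t r u" unfolding n_def by (rule submod_diff[OF im_submod submod_diff[OF im_submod i(1) i(2)] i(3)])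
    thus "n 0 \<in> im t r u" using nconst[of r] by simp
  qed
  hence n0: "n 0 = mzero (A u t)" by (rule imInf_zero)
  have "iota A alpha u t (n 0) = mdiff (Ainf A alpha t) (mdiff (Ainf A alpha t) x0 y0) (mzero (Ainf A alpha t))"
    unfolding n_def using io_diff[OF md[OF mA lc(1) lc(2)] cc] io_diff[OF lc(1) lc(2)] vx vy cK
    unfolding VL_def Kim_eq kerm_def by simp
  hence "mdiff (Ainf A alpha t) x0 y0 = mzero (Ainf A alpha t)"
    using n0 Finf_c[OF x0] Finf_c[OF y0] by simp
  thus ?thesis using diff_zero_iff[OF mAi Finf_c[OF x0] Finf_c[OF y0]] by simp
qed

lemma phi_inj: "inj_on (phi t) (mcarrier (LL t))"
proof (rule inj_onI)
  fix x y assume x: "x \<in> mcarrier (LL t)" and y: "y \<in> mcarrier (LL t)" and e: "phi t x = phi t y"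
  have x0: "x 0 \<in> Finf t" by (rule LL_const(2)[OF x])
  have y0: "y 0 \<in> Finf t" by (rule LL_const(2)[OF y])
  have e': "cW t 0 (del t 0 (x 0)) = cW t 0 (del t 0 (y 0))" using e unfolding phi_def .
  have "cR (trm t) 0 (del t 0 (x 0)) 0 (del t 0 (y 0))"
    by (rule iffD1[OF ccls_eq_iff[of "\<lambda>s. quot (PP t s) (DD t s)" "trm t", OF mWs hWs del_c[OF x0] del_c[OF y0]] e'])
  hence "\<exists>u. u \<ge> 0 \<and> u \<ge> 0 \<and> T (trm t) u 0 (del t 0 (x 0)) = T (trm t) u 0 (del t 0 (y 0))"
    unfolding cR_def[of "\<lambda>s. quot (PP t s) (DD t s)" "trm t", OF mWs hWs] .
  then obtain u where u: "u \<ge> 0" "T (trm t) u 0 (del t 0 (x 0)) = T (trm t) u 0 (del t 0 (y 0))"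
    by (elim exE conjE) (rule that)
  hence "del t u (x 0) = del t u (y 0)" using Tw_del'[OF x0 u(1)] Tw_del'[OF y0 u(1)] by simp
  hence "x 0 = y 0" by (rule del_inj[OF x0 y0])
  show "x = y"
  proof
    fix s show "x s = y s" using LL_const(1)[OF x, of s] LL_const(1)[OF y, of s] \<open>x 0 = y 0\<close> by simp
  qed
qed

lemma phi_surj: assumes w: "w \<in> mcarrier (Wobj A alpha t)" shows "\<exists>x \<in> mcarrier (LL t). phi t x = w"
proof -
  obtain s X where X: "X \<in> mcarrier (quot (PP t s) (DD t s))" "w = cW t s X" using w unfolding Wobj_carrier by blast
  obtain k where k: "k \<in> mcarrier (PP t s)" "X = coset (PP t s) (DD t s) k"
    using X(1) unfolding quot_carrier[OF mPP sDD] by blast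
  have kK: "\<And>r. k r \<in> Kim A alpha s r t" using k(1) unfolding PP_carrier by simp
  have "\<forall>r. \<exists>v. v \<in> mcarrier (A (s - int r) t) \<and> apow alpha t r s v = k r"
  proof
    fix r have "k r \<in> im t r s" using kK[of r] unfolding Kim_eq by simp
    thus "\<exists>v. v \<in> mcarrier (A (s - int r) t) \<and> apow alpha t r s v = k r" unfolding im_def by auto
  qed
  then obtain u where u: "\<And>r. u r \<in> mcarrier (A (s - int r) t)" "\<And>r. apow alpha t r s (u r) = k r" by metis
  define b where "b s' = (if s' \<le> s then u (nat (s - s')) else mzero (A s' t))" for s'
  have bc: "b s' \<in> mcarrier (A s' t)" for s'
  proof (cases "s' \<le> s")
    case True
    hence e: "s - int (nat (s - s')) = s'" by simp
    show ?thesis unfolding b_def using True u(1)[of "nat (s - s')"] unfolding e by simp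
  next
    case False thus ?thesis unfolding b_def by simp
  qed
  have bu: "b (s - int r) = u r" for r unfolding b_def by simp
  obtain c where c: "\<And>s'. c s' \<in> mcarrier (A s' t)" "\<And>s'. b s' = mdiff (A s' t) (c s') (alpha s' t (c (s' - 1)))"
    using Rlim_A_split[OF bc] by metis
  define p where "p r = apow alpha t r s (c (s - int r))" for r
  have pim: "p r \<in> im t r s" for r unfolding p_def im_def using c(1) by simp
  have pc: "p r \<in> mcarrier (A s t)" for r using im_c[OF pim] .
  have pdiff: "mdiff (A s t) (p r) (p (Suc r)) = k r" for r
  proof -
    have c1: "c (s - 1 - int r) \<in> mcarrier (A (s - 1 - int r) t)" by (rule c(1))
    have ac: "alpha (s - int r) t (c (s - 1 - int r)) \<in> mcarrier (A (s - int r) t)"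
      using al_c[of "c (s - 1 - int r)" "s - int r" t] c1 by simp
    have "p (Suc r) = apow alpha t r s (alpha (s - int r) t (c (s - 1 - int r)))"
      unfolding p_def using fpow_Suc2_app[of "\<lambda>s. alpha s t" r s] by simp
    hence "mdiff (A s t) (p r) (p (Suc r)) = apow alpha t r s (mdiff (A (s - int r) t) (c (s - int r)) (alpha (s - int r) t (c (s - 1 - int r))))"
      unfolding p_def using hom_diff[OF mA mA apow_hom c(1) ac] by simp
    also have "mdiff (A (s - int r) t) (c (s - int r)) (alpha (s - int r) t (c (s - 1 - int r))) = b (s - int r)"
      using c(2)[of "s - int r"] by simp
    also have "\<dots> = u r" by (rule bu)
    finally show ?thesis using u(2) by simp
  qed
  define x0 where "x0 = iota A alpha s t (p 0)"
  have ip: "iota A alpha s t (p r) = x0" for r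
  proof (induction r)
    case 0 thus ?case unfolding x0_def ..
  next
    case (Suc r)
    have "mdiff (Ainf A alpha t) (iota A alpha s t (p r)) (iota A alpha s t (p (Suc r))) = iota A alpha s t (k r)"
      using io_diff[OF pc[of r] pc[of "Suc r"]] pdiff[of r] by simp
    also have "\<dots> = mzero (Ainf A alpha t)" using kK[of r] unfolding Kim_eq kerm_def by simp
    finally have "iota A alpha s t (p r) = iota A alpha s t (p (Suc r))"
      using diff_zero_iff[OF mAi io_c[OF pc] io_c[OF pc]] by simp
    thus ?case using Suc by simp
  qed
  have x0F: "x0 \<in> Finf t" unfolding Finf_def
  proof (intro CollectI allI)
    fix s'
    show "x0 \<in> Ffilt A alpha s' t"
    proof (cases "s' \<le> s")
      case True
      define r where "r = nat (s - s')"
      have e: "s - int r = s'" unfolding r_def using True by simp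
      have "x0 = iota A alpha (s - int r) t (c (s - int r))"
        using ip[of r] io_apow[OF c(1)] unfolding p_def by simp
      thus ?thesis unfolding F_eq e using c(1) by simp
    next
      case False
      have "x0 \<in> Ffilt A alpha s t" unfolding F_eq x0_def using pc by simp
      thus ?thesis using F_mono_le[of s s' t] False by auto
    qed
  qed
  define x where "x = (\<lambda>s'::int. x0)"
  have xL: "x \<in> mcarrier (LL t)" unfolding LL_carrier x_def using x0F unfolding Finf_def by simp
  have v: "VL t s x0 p" unfolding VL_def using pim ip by simp
  have "diffs t s p = k" unfolding diffs_def using pdiff by (simp add: fun_eq_iff)
  hence "del t s x0 = X" using del_eq[OF x0F v] k(2) by simp
  hence "phi t x = w" unfolding phi_def x_def using cW_del[OF x0F, of s] X(2) by simp
  thus ?thesis using xL by blast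
qed

lemma part4: "iso (LL t) (Wobj A alpha t)"
proof -
  have "phi t ` mcarrier (LL t) = mcarrier (Wobj A alpha t)"
  proof
    show "phi t ` mcarrier (LL t) \<subseteq> mcarrier (Wobj A alpha t)" using hom_c[OF _ _ phi_hom] phi_hom unfolding hom_def by blast
    show "mcarrier (Wobj A alpha t) \<subseteq> phi t ` mcarrier (LL t)" using phi_surj by blast
  qed
  thus ?thesis unfolding iso_def bij_betw_def using phi_hom phi_inj by blast
qed

end


theorem theorem3p8:
  fixes A :: "int \<Rightarrow> int \<Rightarrow> ('r::ring_1, 'a) rmod"
    and E :: "int \<Rightarrow> int \<Rightarrow> ('r, 'e) rmod"
    and alpha :: "int \<Rightarrow> int \<Rightarrow> 'a \<Rightarrow> 'a"
    and beta :: "int \<Rightarrow> int \<Rightarrow> 'a \<Rightarrow> 'e"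
    and gamma :: "int \<Rightarrow> int \<Rightarrow> 'e \<Rightarrow> 'a"
    and db dg :: int
  assumes ec: "exact_couple A E alpha beta gamma db dg"
    and cc_lim: "\<forall>t. trivial_mod (lim_int (\<lambda>s. A s t) (\<lambda>s. alpha s t))"
    and cc_Rlim: "\<forall>t. trivial_mod (Rlim_int (\<lambda>s. A s t) (\<lambda>s. alpha s t))"
    and RE: "\<forall>s t. trivial_mod (REinf A E alpha gamma dg s t)"
  shows "(\<forall>t. (\<Union>s. Ffilt A alpha s t) = mcarrier (Ainf A alpha t))
       \<and> (\<forall>s t. iso (Einf A E alpha beta gamma db dg s (t + db))
                   (quot (sub (Ainf A alpha t) (Ffilt A alpha s t)) (Ffilt A alpha (s - 1) t)))
       \<and> (\<forall>t. trivial_mod (Rlim_int (\<lambda>s. sub (Ainf A alpha t) (Ffilt A alpha s t)) (\<lambda>s. id)))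
       \<and> (\<forall>t. iso (lim_int (\<lambda>s. sub (Ainf A alpha t) (Ffilt A alpha s t)) (\<lambda>s. id))
                 (Wobj A alpha t))"
proof -
  interpret c: ctx A E alpha beta gamma db dg
    by (rule ctx.intro[OF ec cc_lim cc_Rlim RE])
  show ?thesis using c.part1 c.part2 c.part3 c.part4 by blast
qed

end
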